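(* Let $K$ be a commutative field and $q\in K$. On $\mathcal{H}_{\mathcal{PP}}$ define the bilinear form $\langle-,-\rangle_q$ by, for plane posets $P,Q$, $$\langle P,Q\rangle_q=\begin{cases}q^{\phi(P,Q)}&\text{if }\iota(P)\leq Q,\\ 0&\text{otherwise,}\end{cases}$$ where, for $P,Q$ of the same cardinality, $$\phi(P,Q)=\sharp\{(x,y)\in P^2\mid x<_r y\text{ and }\theta_{P,Q}(x)<_h\theta_{P,Q}(y)\}+\sharp\{(x,y)\in P^2\mid x<_h y\text{ and }\theta_{P,Q}(x)<_r\theta_{P,Q}(y)\}$$ (with $q^0=1$). Then $\langle-,-\rangle_q$ is symmetric and is a Hopf pairing on $(\mathcal{H}_{\mathcal{PP}},m,\Delta_q)$, i.e. $\langle xy,z\rangle_q=\langle x\otimes y,\Delta_q(z)\rangle_q$ for all $x,y,z\in\mathcal{H}_{\mathcal{PP}}$ (where $\langle a\otimes b,c\otimes d\rangle_q=\langle a,c\rangle_q\langle b,d\rangle_q$). Moreover, it is nondegenerate if and only if $q\neq 0$.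
   Context: A plane poset is a finite set with two partial orders $\leq_h,\leq_r$ such that two distinct elements are $\leq_h$-comparable iff they are not $\leq_r$-comparable, considered up to isomorphism; $\mathcal{H}_{\mathcal{PP}}$ is the $K$-vector space with basis the isomorphism classes of plane posets, the empty one denoted $1$. On a plane poset, $x\leq y$ iff ($x\leq_h y$ or $x\leq_r y$) is a total order (known fact). For $P,Q$ of the same cardinality, $\theta_{P,Q}$ is the increasing bijection $P\to Q$, and $P\leq Q$ means: for all $x,y\in P$, $\theta_{P,Q}(x)\leq_h\theta_{P,Q}(y)$ in $Q$ implies $x\leq_h y$ in $P$ ($\leq$ only holds between posets of equal cardinality). $\iota(P)=(P,\leq_r,\leq_h)$. The product $m$: $PQ$ is the plane poset on $P\sqcup Q$ with $P,Q$ plane subposets, no $\leq_h$-comparability between $P$ and $Q$, and $x<_r y$ for $x\in P,y\in Q$, extended bilinearly. A biideal of $P$ is a subset $I$ with $x\in I$ and ($x\leq_h y$ or $x\leq_r y$) implying $y\in I$. The coproduct is $\Delta_q(P)=\sum_{I\text{ biideal of }P}q^{h(P\setminus I,I)}(P\setminus I)\otimes I$ with $h(A,B)=\sharp\{(x,y)\in A\times B\mid x<_h y\}$, $P\setminus I$ and $I$ carrying the restricted orders. *)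

theory Defs
  imports Main "HOL-Library.Poly_Mapping"
begin

type_synonym ppos = "nat set \<times> nat rel \<times> nat rel"

definition car :: "ppos \<Rightarrow> nat set" where "car P = fst P"
definition relh :: "ppos \<Rightarrow> nat rel" where "relh P = fst (snd P)"
definition relr :: "ppos \<Rightarrow> nat rel" where "relr P = snd (snd P)"

definition plane_poset :: "ppos \<Rightarrow> bool" where
  "plane_poset P \<longleftrightarrow> finite (car P) \<and>
     partial_order_on (car P) (relh P) \<and> partial_order_on (car P) (relr P) \<and>
     (\<forall>x\<in>car P. \<forall>y\<in>car P. x \<noteq> y \<longrightarrow>
        (((x,y) \<in> relh P \<or> (y,x) \<in> relh P) \<longleftrightarrow> \<not> ((x,y) \<in> relr P \<or> (y,x) \<in> relr P)))"

definition lth :: "ppos \<Rightarrow> nat \<Rightarrow> nat \<Rightarrow> bool" where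
  "lth P x y \<longleftrightarrow> (x,y) \<in> relh P \<and> x \<noteq> y"
definition ltr :: "ppos \<Rightarrow> nat \<Rightarrow> nat \<Rightarrow> bool" where
  "ltr P x y \<longleftrightarrow> (x,y) \<in> relr P \<and> x \<noteq> y"

definition tle :: "ppos \<Rightarrow> nat \<Rightarrow> nat \<Rightarrow> bool" where
  "tle P x y \<longleftrightarrow> (x,y) \<in> relh P \<or> (x,y) \<in> relr P"

definition pp_iso :: "ppos \<Rightarrow> ppos \<Rightarrow> bool" where
  "pp_iso P Q \<longleftrightarrow> (\<exists>f. bij_betw f (car P) (car Q) \<and>
     (\<forall>x\<in>car P. \<forall>y\<in>car P. ((x,y) \<in> relh P \<longleftrightarrow> (f x, f y) \<in> relh Q) \<and>
                             ((x,y) \<in> relr P \<longleftrightarrow> (f x, f y) \<in> relr Q)))"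

text \<open>theta_{P,Q}: the increasing bijection P \<rightarrow> Q (relevant only on car P).\<close>
definition theta :: "ppos \<Rightarrow> ppos \<Rightarrow> nat \<Rightarrow> nat" where
  "theta P Q = (SOME f. bij_betw f (car P) (car Q) \<and>
      (\<forall>x\<in>car P. \<forall>y\<in>car P. tle P x y \<longrightarrow> tle Q (f x) (f y)))"

definition pp_le :: "ppos \<Rightarrow> ppos \<Rightarrow> bool" where
  "pp_le P Q \<longleftrightarrow> card (car P) = card (car Q) \<and>
     (\<forall>x\<in>car P. \<forall>y\<in>car P. (theta P Q x, theta P Q y) \<in> relh Q \<longrightarrow> (x,y) \<in> relh P)"

definition iota :: "ppos \<Rightarrow> ppos" where
  "iota P = (car P, relr P, relh P)"

definition phi :: "ppos \<Rightarrow> ppos \<Rightarrow> nat" where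
  "phi P Q =
     card {(x,y) \<in> car P \<times> car P. ltr P x y \<and> lth Q (theta P Q x) (theta P Q y)}
   + card {(x,y) \<in> car P \<times> car P. lth P x y \<and> ltr Q (theta P Q x) (theta P Q y)}"

definition pp_pair :: "'k::field \<Rightarrow> ppos \<Rightarrow> ppos \<Rightarrow> 'k" where
  "pp_pair q P Q = (if pp_le (iota P) Q then q ^ phi P Q else 0)"

text \<open>Product PQ: disjoint union (P embedded via 2x, Q via 2x+1), no h-comparabilities
 between P and Q, and x <_r y for x in P, y in Q.\<close>
definition pp_prod :: "ppos \<Rightarrow> ppos \<Rightarrow> ppos" where
  "pp_prod P Q =
    ((\<lambda>x. 2*x) ` car P \<union> (\<lambda>x. 2*x+1) ` car Q,
     (\<lambda>(x,y). (2*x, 2*y)) ` relh P \<union> (\<lambda>(x,y). (2*x+1, 2*y+1)) ` relh Q,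
     (\<lambda>(x,y). (2*x, 2*y)) ` relr P \<union> (\<lambda>(x,y). (2*x+1, 2*y+1)) ` relr Q
       \<union> {(2*x, 2*y+1) | x y. x \<in> car P \<and> y \<in> car Q})"

definition biideal :: "ppos \<Rightarrow> nat set \<Rightarrow> bool" where
  "biideal P I \<longleftrightarrow> I \<subseteq> car P \<and>
     (\<forall>x\<in>I. \<forall>y\<in>car P. ((x,y) \<in> relh P \<or> (x,y) \<in> relr P) \<longrightarrow> y \<in> I)"

definition restr :: "ppos \<Rightarrow> nat set \<Rightarrow> ppos" where
  "restr P S = (S, relh P \<inter> (S \<times> S), relr P \<inter> (S \<times> S))"

definition hcount :: "ppos \<Rightarrow> nat set \<Rightarrow> nat set \<Rightarrow> nat" where
  "hcount P A B = card {(x,y) \<in> A \<times> B. lth P x y}"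

definition pp_class :: "ppos \<Rightarrow> ppos set" where
  "pp_class P = {Q. plane_poset Q \<and> pp_iso P Q}"

typedef ppc = "{pp_class P | P. plane_poset P}"
  morphisms ppc_set Abs_ppc
proof -
  have "plane_poset ({}, {}, {})"
    by (simp add: plane_poset_def car_def relh_def relr_def partial_order_on_def
        preorder_on_def refl_on_def trans_def antisym_def)
  then show ?thesis by blast
qed

definition class_of :: "ppos \<Rightarrow> ppc" where
  "class_of P = Abs_ppc (pp_class P)"

definition rep :: "ppc \<Rightarrow> ppos" where
  "rep c = (SOME P. P \<in> ppc_set c)"

text \<open>H_PP over K: finitely supported K-valued functions on isomorphism classes
 (K-vector space with basis the classes); H_PP \<otimes> H_PP: same on pairs of classes.\<close>
type_synonym 'k hpp = "ppc \<Rightarrow>\<^sub>0 'k"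
type_synonym 'k hpp2 = "(ppc \<times> ppc) \<Rightarrow>\<^sub>0 'k"

definition basis :: "ppc \<Rightarrow> 'k::field hpp" where
  "basis c = Poly_Mapping.single c 1"

definition form :: "'k::field \<Rightarrow> 'k hpp \<Rightarrow> 'k hpp \<Rightarrow> 'k" where
  "form q x y = (\<Sum>a\<in>Poly_Mapping.keys x. \<Sum>b\<in>Poly_Mapping.keys y.
      Poly_Mapping.lookup x a * Poly_Mapping.lookup y b * pp_pair q (rep a) (rep b))"

definition hmult :: "'k::field hpp \<Rightarrow> 'k hpp \<Rightarrow> 'k hpp" where
  "hmult x y = (\<Sum>a\<in>Poly_Mapping.keys x. \<Sum>b\<in>Poly_Mapping.keys y.
      Poly_Mapping.single (class_of (pp_prod (rep a) (rep b)))
        (Poly_Mapping.lookup x a * Poly_Mapping.lookup y b))"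

definition delta_basis :: "'k::field \<Rightarrow> ppc \<Rightarrow> 'k hpp2" where
  "delta_basis q c = (let P = rep c in
     \<Sum>I\<in>{I. biideal P I}.
       Poly_Mapping.single (class_of (restr P (car P - I)), class_of (restr P I))
         (q ^ hcount P (car P - I) I))"

definition delta :: "'k::field \<Rightarrow> 'k hpp \<Rightarrow> 'k hpp2" where
  "delta q z = (\<Sum>a\<in>Poly_Mapping.keys z.
      Poly_Mapping.map (\<lambda>t. Poly_Mapping.lookup z a * t) (delta_basis q a))"

definition tform :: "'k::field \<Rightarrow> 'k hpp \<Rightarrow> 'k hpp \<Rightarrow> 'k hpp2 \<Rightarrow> 'k" where
  "tform q x y t = (\<Sum>cd\<in>Poly_Mapping.keys t.
      Poly_Mapping.lookup t cd * form q x (basis (fst cd)) * form q y (basis (snd cd)))"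

definition nondegenerate :: "'k::field \<Rightarrow> bool" where
  "nondegenerate q \<longleftrightarrow>
     (\<forall>x::'k hpp. (\<forall>y. form q x y = 0) \<longrightarrow> x = 0) \<and>
     (\<forall>y::'k hpp. (\<forall>x. form q x y = 0) \<longrightarrow> y = 0)"

end

theory Submission imports Defs begin

lemma pp_basic:
  assumes "plane_poset P"
  shows "finite (car P)" "relh P \<subseteq> car P \<times> car P" "relr P \<subseteq> car P \<times> car P"
    "refl_on (car P) (relh P)" "refl_on (car P) (relr P)"
    "trans (relh P)" "trans (relr P)" "antisym (relh P)" "antisym (relr P)"
  using assms unfolding plane_poset_def partial_order_on_def preorder_on_def by auto

lemma pp_cond:
  assumes "plane_poset P" "x \<in> car P" "y \<in> car P" "x \<noteq> y"
  shows "((x,y) \<in> relh P \<or> (y,x) \<in> relh P) \<longleftrightarrow> \<not> ((x,y) \<in> relr P \<or> (y,x) \<in> relr P)"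
  using assms unfolding plane_poset_def by blast

lemma hsub: "plane_poset P \<Longrightarrow> (x,y) \<in> relh P \<Longrightarrow> x \<in> car P \<and> y \<in> car P"
  using pp_basic(2) by blast
lemma rsub: "plane_poset P \<Longrightarrow> (x,y) \<in> relr P \<Longrightarrow> x \<in> car P \<and> y \<in> car P"
  using pp_basic(3) by blast
lemma hrefl: "plane_poset P \<Longrightarrow> x \<in> car P \<Longrightarrow> (x,x) \<in> relh P"
  using pp_basic(4) by (auto simp: refl_on_def)
lemma rrefl: "plane_poset P \<Longrightarrow> x \<in> car P \<Longrightarrow> (x,x) \<in> relr P"
  using pp_basic(5) by (auto simp: refl_on_def)
lemma htrans: "plane_poset P \<Longrightarrow> (x,y) \<in> relh P \<Longrightarrow> (y,z) \<in> relh P \<Longrightarrow> (x,z) \<in> relh P"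
  using pp_basic(6) by (meson transD)
lemma rtrans: "plane_poset P \<Longrightarrow> (x,y) \<in> relr P \<Longrightarrow> (y,z) \<in> relr P \<Longrightarrow> (x,z) \<in> relr P"
  using pp_basic(7) by (meson transD)
lemma hanti: "plane_poset P \<Longrightarrow> (x,y) \<in> relh P \<Longrightarrow> (y,x) \<in> relh P \<Longrightarrow> x = y"
  using pp_basic(8) by (meson antisymD)
lemma ranti: "plane_poset P \<Longrightarrow> (x,y) \<in> relr P \<Longrightarrow> (y,x) \<in> relr P \<Longrightarrow> x = y"
  using pp_basic(9) by (meson antisymD)

lemma hr_excl: "plane_poset P \<Longrightarrow> x \<noteq> y \<Longrightarrow> (x,y) \<in> relh P \<or> (y,x) \<in> relh P \<Longrightarrow>
   (x,y) \<notin> relr P \<and> (y,x) \<notin> relr P"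
  using pp_cond hsub by metis

lemma hr_tot: "plane_poset P \<Longrightarrow> x \<in> car P \<Longrightarrow> y \<in> car P \<Longrightarrow> x \<noteq> y \<Longrightarrow>
   (x,y) \<in> relh P \<or> (y,x) \<in> relh P \<or> (x,y) \<in> relr P \<or> (y,x) \<in> relr P"
  using pp_cond by metis

lemma tle_car: "plane_poset P \<Longrightarrow> tle P x y \<Longrightarrow> x \<in> car P \<and> y \<in> car P"
  unfolding tle_def using hsub rsub by blast

lemma tle_refl: "plane_poset P \<Longrightarrow> x \<in> car P \<Longrightarrow> tle P x x"
  unfolding tle_def using hrefl by blast

lemma tle_antisym: "plane_poset P \<Longrightarrow> tle P x y \<Longrightarrow> tle P y x \<Longrightarrow> x = y"
  unfolding tle_def using hanti ranti hr_excl by metis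

lemma tle_total: "plane_poset P \<Longrightarrow> x \<in> car P \<Longrightarrow> y \<in> car P \<Longrightarrow> tle P x y \<or> tle P y x"
  unfolding tle_def using hr_tot hrefl by metis

lemma tle_trans:
  assumes P: "plane_poset P" and xy: "tle P x y" and yz: "tle P y z"
  shows "tle P x z"
proof -
  have car: "x \<in> car P" "y \<in> car P" "z \<in> car P" using tle_car[OF P] xy yz by auto
  show ?thesis
  proof (rule ccontr)
    assume nxz: "\<not> tle P x z"
    then have zx: "tle P z x" "x \<noteq> z" using tle_total[OF P car(1) car(3)] tle_refl[OF P car(1)] by auto
    have "x \<noteq> y" using nxz yz by auto
    have "y \<noteq> z" using nxz xy by auto
    from xy yz zx show False unfolding tle_def
      using htrans[OF P] rtrans[OF P] hr_excl[OF P] hanti[OF P] ranti[OF P]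
        \<open>x \<noteq> y\<close> \<open>y \<noteq> z\<close> \<open>x \<noteq> z\<close> by metis
  qed
qed

definition tlt :: "ppos \<Rightarrow> nat \<Rightarrow> nat \<Rightarrow> bool" where
  "tlt P x y \<longleftrightarrow> tle P x y \<and> x \<noteq> y"

definition rk :: "ppos \<Rightarrow> nat \<Rightarrow> nat" where
  "rk P x = card {y \<in> car P. tlt P y x}"

lemma tlt_trans: "plane_poset P \<Longrightarrow> tlt P x y \<Longrightarrow> tlt P y z \<Longrightarrow> tlt P x z"
  unfolding tlt_def using tle_trans tle_antisym by metis

lemma rk_less:
  assumes P: "plane_poset P" and xy: "tlt P x y"
  shows "rk P x < rk P y"
proof -
  have "{z \<in> car P. tlt P z x} \<subset> {z \<in> car P. tlt P z y}"
  proof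
    show "{z \<in> car P. tlt P z x} \<subseteq> {z \<in> car P. tlt P z y}" using tlt_trans[OF P] xy by blast
    have "x \<in> car P" using xy tle_car[OF P] unfolding tlt_def by blast
    then show "{z \<in> car P. tlt P z x} \<noteq> {z \<in> car P. tlt P z y}" using xy by (auto simp: tlt_def)
  qed
  then show ?thesis unfolding rk_def using pp_basic(1)[OF P]
    by (simp add: psubset_card_mono)
qed

lemma rk_less_iff:
  assumes P: "plane_poset P" and x: "x \<in> car P" and y: "y \<in> car P"
  shows "rk P x < rk P y \<longleftrightarrow> tlt P x y"
proof
  assume "rk P x < rk P y"
  show "tlt P x y"
  proof (rule ccontr)
    assume "\<not> tlt P x y"
    then have "y = x \<or> tlt P y x" using tle_total[OF P x y] unfolding tlt_def by auto
    then show False using rk_less[OF P] \<open>rk P x < rk P y\<close> by fastforce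
  qed
qed (rule rk_less[OF P])

lemma rk_inj:
  assumes P: "plane_poset P" and x: "x \<in> car P" and y: "y \<in> car P" and e: "rk P x = rk P y"
  shows "x = y"
  using tle_total[OF P x y] rk_less[OF P] e unfolding tlt_def by fastforce

lemma rk_bound:
  assumes P: "plane_poset P" and x: "x \<in> car P"
  shows "rk P x < card (car P)"
proof -
  have "{y \<in> car P. tlt P y x} \<subset> car P" using x by (auto simp: tlt_def)
  then show ?thesis unfolding rk_def using pp_basic(1)[OF P] by (simp add: psubset_card_mono)
qed

lemma rk_bij:
  assumes P: "plane_poset P"
  shows "bij_betw (rk P) (car P) {..<card (car P)}"
proof -
  have inj: "inj_on (rk P) (car P)" using rk_inj[OF P] by (meson inj_onI)
  have sub: "rk P ` car P \<subseteq> {..<card (car P)}" using rk_bound[OF P] by auto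
  have "card (rk P ` car P) = card {..<card (car P)}" using card_image[OF inj] by simp
  then have "rk P ` car P = {..<card (car P)}" using sub by (simp add: card_subset_eq)
  then show ?thesis using inj by (simp add: bij_betw_def)
qed

lemma rk_surj:
  assumes P: "plane_poset P" and i: "i < card (car P)"
  shows "\<exists>x\<in>car P. rk P x = i"
  using rk_bij[OF P] i by (metis bij_betw_def imageE lessThan_iff)


lemma mono_rank:
  assumes P: "plane_poset P" and Q: "plane_poset Q" and f: "bij_betw f (car P) (car Q)"
    and mono: "\<forall>x\<in>car P. \<forall>y\<in>car P. tle P x y \<longrightarrow> tle Q (f x) (f y)"
    and x: "x \<in> car P"
  shows "rk Q (f x) = rk P x"
proof -
  have inj: "inj_on f (car P)" and im: "f ` car P = car Q" using f by (auto simp: bij_betw_def)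
  have "{y \<in> car Q. tlt Q y (f x)} = f ` {y \<in> car P. tlt P y x}"
  proof
    show "f ` {y \<in> car P. tlt P y x} \<subseteq> {y \<in> car Q. tlt Q y (f x)}"
    proof
      fix u assume "u \<in> f ` {y \<in> car P. tlt P y x}"
      then obtain y where y: "y \<in> car P" "tlt P y x" "u = f y" by auto
      have "f y \<noteq> f x" using inj y x unfolding tlt_def by (meson inj_onD)
      then show "u \<in> {y \<in> car Q. tlt Q y (f x)}" using mono y x im unfolding tlt_def by auto
    qed
    show "{y \<in> car Q. tlt Q y (f x)} \<subseteq> f ` {y \<in> car P. tlt P y x}"
    proof
      fix u assume u: "u \<in> {y \<in> car Q. tlt Q y (f x)}"
      then obtain y where y: "y \<in> car P" "u = f y" using im by auto
      have "tlt P y x"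
      proof (rule ccontr)
        assume "\<not> tlt P y x"
        then have "tle P x y" using tle_total[OF P x y(1)] tle_refl[OF P x] unfolding tlt_def by auto
        then have "tle Q (f x) u" using mono x y by auto
        then show False using u tle_antisym[OF Q] unfolding tlt_def by auto
      qed
      then show "u \<in> f ` {y \<in> car P. tlt P y x}" using y by auto
    qed
  qed
  moreover have "inj_on f {y \<in> car P. tlt P y x}" using inj by (rule inj_on_subset) auto
  ultimately show ?thesis unfolding rk_def by (simp add: card_image)
qed

lemma tlt_iff_rk:
  "plane_poset P \<Longrightarrow> x \<in> car P \<Longrightarrow> y \<in> car P \<Longrightarrow> tle P x y \<longleftrightarrow> rk P x \<le> rk P y"
  using rk_less_iff[of P x y] rk_less_iff[of P y x] tle_total[of P x y] tle_refl[of P x]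
  unfolding tlt_def by (metis le_less not_less tle_antisym)

lemma theta_prop:
  assumes P: "plane_poset P" and Q: "plane_poset Q" and c: "card (car P) = card (car Q)"
  shows "bij_betw (theta P Q) (car P) (car Q) \<and> (\<forall>x\<in>car P. rk Q (theta P Q x) = rk P x)"
proof -
  define g where "g = the_inv_into (car Q) (rk Q)"
  define f where "f = (\<lambda>x. g (rk P x))"
  have bQ: "bij_betw (rk Q) (car Q) {..<card (car P)}" using rk_bij[OF Q] c by simp
  have bg: "bij_betw g {..<card (car P)} (car Q)" unfolding g_def
    by (rule bij_betw_the_inv_into[OF bQ])
  have bf: "bij_betw f (car P) (car Q)" unfolding f_def
    using bij_betw_trans[OF rk_bij[OF P] bg] by (simp add: comp_def)
  have rf: "\<forall>x\<in>car P. rk Q (f x) = rk P x" unfolding f_def g_def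
    using bQ rk_bound[OF P] by (auto simp: bij_betw_def f_the_inv_into_f)
  have mf: "\<forall>x\<in>car P. \<forall>y\<in>car P. tle P x y \<longrightarrow> tle Q (f x) (f y)"
    using rf tlt_iff_rk[OF P] tlt_iff_rk[OF Q] bf by (metis bij_betwE)
  have ex: "\<exists>f. bij_betw f (car P) (car Q) \<and>
      (\<forall>x\<in>car P. \<forall>y\<in>car P. tle P x y \<longrightarrow> tle Q (f x) (f y))" using bf mf by blast
  have th: "bij_betw (theta P Q) (car P) (car Q) \<and>
      (\<forall>x\<in>car P. \<forall>y\<in>car P. tle P x y \<longrightarrow> tle Q (theta P Q x) (theta P Q y))"
    unfolding theta_def by (rule someI_ex[OF ex])
  then show ?thesis using mono_rank[OF P Q] by blast
qed


section \<open>Codes\<close>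

definition hp :: "ppos \<Rightarrow> (nat \<times> nat) set" where
  "hp P = {(x,y) \<in> car P \<times> car P. lth P x y}"

definition rr :: "ppos \<Rightarrow> nat \<times> nat \<Rightarrow> nat \<times> nat" where
  "rr P = (\<lambda>(x,y). (rk P x, rk P y))"

definition code :: "ppos \<Rightarrow> (nat \<times> nat) set" where
  "code P = rr P ` hp P"

lemma rr_inj:
  assumes P: "plane_poset P" and S: "S \<subseteq> car P \<times> car P"
  shows "inj_on (rr P) S"
proof (rule inj_onI)
  fix a b assume a: "a \<in> S" and b: "b \<in> S" and e: "rr P a = rr P b"
  obtain a1 a2 b1 b2 where ab: "a = (a1,a2)" "b = (b1,b2)" by (cases a, cases b)
  then have "a1 \<in> car P" "a2 \<in> car P" "b1 \<in> car P" "b2 \<in> car P" using a b S by auto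
  moreover have "rk P a1 = rk P b1" "rk P a2 = rk P b2" using e ab by (auto simp: rr_def)
  ultimately show "a = b" using ab rk_inj[OF P] by metis
qed

lemma card_rr: "plane_poset P \<Longrightarrow> S \<subseteq> car P \<times> car P \<Longrightarrow> card (rr P ` S) = card S"
  using rr_inj card_image by blast

lemma card_code: "plane_poset P \<Longrightarrow> card (code P) = card (hp P)"
  unfolding code_def by (rule card_rr) (auto simp: hp_def)

lemma lth_car: "plane_poset P \<Longrightarrow> lth P x y \<Longrightarrow> x \<in> car P \<and> y \<in> car P"
  unfolding lth_def using hsub by blast

lemma lth_tlt: "lth P x y \<Longrightarrow> tlt P x y"
  unfolding lth_def tlt_def tle_def by auto

lemma code_mem:
  assumes P: "plane_poset P" and x: "x \<in> car P" and y: "y \<in> car P"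
  shows "(rk P x, rk P y) \<in> code P \<longleftrightarrow> lth P x y"
proof
  assume "(rk P x, rk P y) \<in> code P"
  then obtain a b where ab: "(a,b) \<in> hp P" "rk P a = rk P x" "rk P b = rk P y"
    unfolding code_def rr_def by auto
  then have "a = x" "b = y" using rk_inj[OF P] x y by (auto simp: hp_def)
  then show "lth P x y" using ab by (auto simp: hp_def)
next
  assume "lth P x y" then show "(rk P x, rk P y) \<in> code P"
    unfolding code_def rr_def hp_def using x y by force
qed

lemma code_sub: "plane_poset P \<Longrightarrow> (i,j) \<in> code P \<Longrightarrow> i < j \<and> j < card (car P)"
proof -
  assume P: "plane_poset P" and ij: "(i,j) \<in> code P"
  then obtain x y where "(x,y) \<in> hp P" "i = rk P x" "j = rk P y" unfolding code_def rr_def by auto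
  then have "x \<in> car P" "y \<in> car P" "lth P x y" unfolding hp_def by auto
  then show ?thesis using rk_less[OF P] lth_tlt rk_bound[OF P] \<open>i = rk P x\<close> \<open>j = rk P y\<close> by blast
qed

lemma code_elem:
  assumes P: "plane_poset P" and ij: "(i,j) \<in> code P"
  obtains x y where "x \<in> car P" "y \<in> car P" "i = rk P x" "j = rk P y" "lth P x y"
  using ij unfolding code_def rr_def hp_def by auto

lemma relh_code:
  assumes P: "plane_poset P" and x: "x \<in> car P" and y: "y \<in> car P" and ne: "x \<noteq> y"
  shows "(x,y) \<in> relh P \<longleftrightarrow> (rk P x, rk P y) \<in> code P"
  using code_mem[OF P x y] ne unfolding lth_def by auto

lemma relr_code:
  assumes P: "plane_poset P" and x: "x \<in> car P" and y: "y \<in> car P" and ne: "x \<noteq> y"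
  shows "(x,y) \<in> relr P \<longleftrightarrow> rk P x < rk P y \<and> (rk P x, rk P y) \<notin> code P"
proof
  assume r: "(x,y) \<in> relr P"
  then have "tlt P x y" using ne unfolding tlt_def tle_def by auto
  moreover have "\<not> lth P x y" using hr_excl[OF P ne] r unfolding lth_def by blast
  ultimately show "rk P x < rk P y \<and> (rk P x, rk P y) \<notin> code P"
    using rk_less[OF P] code_mem[OF P x y] by blast
next
  assume a: "rk P x < rk P y \<and> (rk P x, rk P y) \<notin> code P"
  then have "tlt P x y" "\<not> lth P x y" using rk_less_iff[OF P x y] code_mem[OF P x y] by auto
  then show "(x,y) \<in> relr P" unfolding tlt_def tle_def lth_def by auto
qed

lemma theta_iota: "theta (iota P) Q = theta P Q"
proof -
  have "tle (iota P) = tle P" unfolding tle_def iota_def relh_def relr_def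
    by (auto simp: fun_eq_iff)
  moreover have "car (iota P) = car P" by (simp add: iota_def car_def)
  ultimately show ?thesis unfolding theta_def by simp
qed

lemma iota_simps [simp]: "car (iota P) = car P" "relh (iota P) = relr P" "relr (iota P) = relh P"
  by (simp_all add: iota_def car_def relh_def relr_def)

lemma pp_pair_code:
  assumes P: "plane_poset P" and Q: "plane_poset Q"
  shows "pp_pair q P Q = (if card (car P) = card (car Q) \<and> code P \<inter> code Q = {}
           then q ^ (card (code P) + card (code Q)) else 0)"
proof (cases "card (car P) = card (car Q)")
  case False
  then show ?thesis unfolding pp_pair_def pp_le_def by simp
next
  case c: True
  define t where "t = theta P Q"
  have tb: "bij_betw t (car P) (car Q)" and tr: "\<forall>x\<in>car P. rk Q (t x) = rk P x"
    using theta_prop[OF P Q c] unfolding t_def by auto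
  have tin: "\<And>x. x \<in> car P \<Longrightarrow> t x \<in> car Q" using tb by (meson bij_betwE)
  have tinj: "\<And>x y. x \<in> car P \<Longrightarrow> y \<in> car P \<Longrightarrow> t x = t y \<Longrightarrow> x = y"
    using tb by (metis bij_betw_imp_inj_on inj_onD)
  have cQ: "\<And>x y. x \<in> car P \<Longrightarrow> y \<in> car P \<Longrightarrow> lth Q (t x) (t y) \<longleftrightarrow> (rk P x, rk P y) \<in> code Q"
    using code_mem[OF Q] tin tr by metis
  have cP: "\<And>x y. x \<in> car P \<Longrightarrow> y \<in> car P \<Longrightarrow> lth P x y \<longleftrightarrow> (rk P x, rk P y) \<in> code P"
    using code_mem[OF P] by metis
  have surj: "\<And>i. i < card (car P) \<Longrightarrow> \<exists>x\<in>car P. rk P x = i" using rk_surj[OF P] by blast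
  have le_iff: "pp_le (iota P) Q \<longleftrightarrow> code P \<inter> code Q = {}"
  proof -
    have "pp_le (iota P) Q \<longleftrightarrow> (\<forall>x\<in>car P. \<forall>y\<in>car P. (t x, t y) \<in> relh Q \<longrightarrow> (x,y) \<in> relr P)"
      unfolding pp_le_def t_def theta_iota using c by simp
    also have "\<dots> \<longleftrightarrow> (\<forall>x\<in>car P. \<forall>y\<in>car P. x \<noteq> y \<longrightarrow> (rk P x, rk P y) \<in> code Q \<longrightarrow> (rk P x, rk P y) \<notin> code P)"
    proof -
      have "((t x, t y) \<in> relh Q \<longrightarrow> (x,y) \<in> relr P) \<longleftrightarrow> (x \<noteq> y \<longrightarrow> (rk P x, rk P y) \<in> code Q \<longrightarrow> (rk P x, rk P y) \<notin> code P)"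
        if x: "x \<in> car P" and y: "y \<in> car P" for x y
      proof (cases "x = y")
        case True then show ?thesis using rrefl[OF P x] by simp
      next
        case ne: False
        then have tne: "t x \<noteq> t y" using tinj x y by blast
        have e1: "(t x, t y) \<in> relh Q \<longleftrightarrow> (rk P x, rk P y) \<in> code Q"
          using cQ[OF x y] tne unfolding lth_def by simp
        have e2: "(rk P x, rk P y) \<in> code Q \<Longrightarrow> rk P x < rk P y" using code_sub[OF Q] by blast
        show ?thesis using e1 e2 relr_code[OF P x y ne] ne by blast
      qed
      then show ?thesis by blast
    qed
    also have "\<dots> \<longleftrightarrow> code P \<inter> code Q = {}"
    proof
      assume h: "\<forall>x\<in>car P. \<forall>y\<in>car P. x \<noteq> y \<longrightarrow> (rk P x, rk P y) \<in> code Q \<longrightarrow> (rk P x, rk P y) \<notin> code P"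
      show "code P \<inter> code Q = {}"
      proof (rule ccontr)
        assume "code P \<inter> code Q \<noteq> {}"
        then obtain i j where ij: "(i,j) \<in> code P" "(i,j) \<in> code Q" by auto
        obtain x y where xy: "x \<in> car P" "y \<in> car P" "i = rk P x" "j = rk P y" "lth P x y"
          by (rule code_elem[OF P ij(1)])
        then show False using h ij unfolding lth_def by auto
      qed
    qed auto
    finally show ?thesis .
  qed
  show ?thesis
  proof (cases "code P \<inter> code Q = {}")
    case False then show ?thesis unfolding pp_pair_def using le_iff by simp
  next
    case d: True
    have S1: "{(x,y) \<in> car P \<times> car P. ltr P x y \<and> lth Q (t x) (t y)}
            = {(x,y) \<in> car P \<times> car P. lth Q (t x) (t y)}"
    proof -
      {
        fix x y assume x: "x \<in> car P" and y: "y \<in> car P" and l: "lth Q (t x) (t y)"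
        have ne: "x \<noteq> y" using l unfolding lth_def by auto
        have inQ: "(rk P x, rk P y) \<in> code Q" using cQ[OF x y] l by simp
        then have "(rk P x, rk P y) \<notin> code P" "rk P x < rk P y" using d code_sub[OF Q inQ] by auto
        then have "ltr P x y" using relr_code[OF P x y ne] ne unfolding ltr_def by simp
      }
      then show ?thesis by auto
    qed
    have S1c: "card {(x,y) \<in> car P \<times> car P. lth Q (t x) (t y)} = card (code Q)"
    proof -
      have "rr P ` {(x,y) \<in> car P \<times> car P. lth Q (t x) (t y)} = code Q"
      proof
        show "rr P ` {(x,y) \<in> car P \<times> car P. lth Q (t x) (t y)} \<subseteq> code Q"
          using cQ unfolding rr_def by auto
        show "code Q \<subseteq> rr P ` {(x,y) \<in> car P \<times> car P. lth Q (t x) (t y)}"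
        proof
          fix p assume p: "p \<in> code Q"
          obtain i j where ij: "p = (i,j)" by (cases p)
          have "i < card (car P)" "j < card (car P)" using code_sub[OF Q] p ij c by fastforce+
          then obtain x y where "x \<in> car P" "y \<in> car P" "rk P x = i" "rk P y = j" using surj by metis
          then show "p \<in> rr P ` {(x,y) \<in> car P \<times> car P. lth Q (t x) (t y)}"
            using p ij cQ unfolding rr_def by (auto intro!: image_eqI[where x="(x,y)"])
        qed
      qed
      moreover have "card (rr P ` {(x,y) \<in> car P \<times> car P. lth Q (t x) (t y)}) = card {(x,y) \<in> car P \<times> car P. lth Q (t x) (t y)}"
        by (rule card_rr[OF P]) auto
      ultimately show ?thesis by simp
    qed
    have S2: "{(x,y) \<in> car P \<times> car P. lth P x y \<and> ltr Q (t x) (t y)} = hp P"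
    proof -
      {
        fix x y assume x: "x \<in> car P" and y: "y \<in> car P" and l: "lth P x y"
        have ne: "x \<noteq> y" using l unfolding lth_def by auto
        have tne: "t x \<noteq> t y" using ne tinj x y by blast
        have inP: "(rk P x, rk P y) \<in> code P" using cP[OF x y] l by simp
        then have "(rk P x, rk P y) \<notin> code Q" "rk P x < rk P y" using d code_sub[OF P inP] by auto
        then have "ltr Q (t x) (t y)" using relr_code[OF Q tin[OF x] tin[OF y] tne] tne tr x y
          unfolding ltr_def by simp
      }
      then show ?thesis unfolding hp_def by auto
    qed
    have "phi P Q = card (code Q) + card (code P)"
      unfolding phi_def t_def[symmetric] S1 S1c S2 card_code[OF P] by simp
    then show ?thesis unfolding pp_pair_def using le_iff d c by (simp add: add.commute)
  qed
qed


lemma iso_code: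
  assumes P: "plane_poset P" and Q: "plane_poset Q"
  shows "pp_iso P Q \<longleftrightarrow> card (car P) = card (car Q) \<and> code P = code Q"
proof
  assume "pp_iso P Q"
  then obtain f where fb: "bij_betw f (car P) (car Q)" and
    fr: "\<forall>x\<in>car P. \<forall>y\<in>car P. ((x,y) \<in> relh P \<longleftrightarrow> (f x, f y) \<in> relh Q) \<and>
                             ((x,y) \<in> relr P \<longleftrightarrow> (f x, f y) \<in> relr Q)"
    unfolding pp_iso_def by blast
  have mono: "\<forall>x\<in>car P. \<forall>y\<in>car P. tle P x y \<longrightarrow> tle Q (f x) (f y)"
    using fr unfolding tle_def by blast
  have rkf: "\<And>x. x \<in> car P \<Longrightarrow> rk Q (f x) = rk P x" using mono_rank[OF P Q fb mono] by blast
  have fin: "\<And>x. x \<in> car P \<Longrightarrow> f x \<in> car Q" using fb by (meson bij_betwE)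
  have finj: "\<And>x y. x \<in> car P \<Longrightarrow> y \<in> car P \<Longrightarrow> f x = f y \<Longrightarrow> x = y"
    using fb by (metis bij_betw_imp_inj_on inj_onD)
  have fs: "\<And>u. u \<in> car Q \<Longrightarrow> \<exists>x\<in>car P. u = f x" using fb by (metis bij_betw_def imageE)
  have lf: "\<And>x y. x \<in> car P \<Longrightarrow> y \<in> car P \<Longrightarrow> lth P x y \<longleftrightarrow> lth Q (f x) (f y)"
    using fr finj unfolding lth_def by blast
  have "code P = code Q"
  proof
    show "code P \<subseteq> code Q"
    proof
      fix p assume "p \<in> code P"
      then obtain i j where ij: "p = (i,j)" "(i,j) \<in> code P" by (cases p) auto
      obtain x y where xy: "x \<in> car P" "y \<in> car P" "i = rk P x" "j = rk P y" "lth P x y"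
        by (rule code_elem[OF P ij(2)])
      then show "p \<in> code Q" using code_mem[OF Q fin[OF xy(1)] fin[OF xy(2)]] lf rkf ij by simp
    qed
    show "code Q \<subseteq> code P"
    proof
      fix p assume "p \<in> code Q"
      then obtain i j where ij: "p = (i,j)" "(i,j) \<in> code Q" by (cases p) auto
      obtain u v where uv: "u \<in> car Q" "v \<in> car Q" "i = rk Q u" "j = rk Q v" "lth Q u v"
        by (rule code_elem[OF Q ij(2)])
      obtain x y where xy: "x \<in> car P" "y \<in> car P" "u = f x" "v = f y" using fs uv by metis
      then show "p \<in> code P" using code_mem[OF P xy(1) xy(2)] lf rkf ij uv by simp
    qed
  qed
  moreover have "card (car P) = card (car Q)" using fb by (rule bij_betw_same_card)
  ultimately show "card (car P) = card (car Q) \<and> code P = code Q" by simp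
next
  assume a: "card (car P) = card (car Q) \<and> code P = code Q"
  define t where "t = theta P Q"
  have tb: "bij_betw t (car P) (car Q)" and tr: "\<forall>x\<in>car P. rk Q (t x) = rk P x"
    using theta_prop[OF P Q] a unfolding t_def by auto
  have tin: "\<And>x. x \<in> car P \<Longrightarrow> t x \<in> car Q" using tb by (meson bij_betwE)
  have tinj: "\<And>x y. x \<in> car P \<Longrightarrow> y \<in> car P \<Longrightarrow> t x = t y \<Longrightarrow> x = y"
    using tb by (metis bij_betw_imp_inj_on inj_onD)
  have "((x,y) \<in> relh P \<longleftrightarrow> (t x, t y) \<in> relh Q) \<and> ((x,y) \<in> relr P \<longleftrightarrow> (t x, t y) \<in> relr Q)"
    if x: "x \<in> car P" and y: "y \<in> car P" for x y
  proof (cases "x = y")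
    case True then show ?thesis using hrefl[OF P x] rrefl[OF P x] hrefl[OF Q tin[OF x]] rrefl[OF Q tin[OF x]] by simp
  next
    case ne: False
    then have tne: "t x \<noteq> t y" using tinj x y by blast
    show ?thesis using relh_code[OF P x y ne] relh_code[OF Q tin[OF x] tin[OF y] tne]
        relr_code[OF P x y ne] relr_code[OF Q tin[OF x] tin[OF y] tne] tr x y a by simp
  qed
  then show "pp_iso P Q" unfolding pp_iso_def using tb by blast
qed


lemma iso_refl: "plane_poset P \<Longrightarrow> pp_iso P P"
  using iso_code by blast

lemma pp_class_code: "plane_poset P \<Longrightarrow>
  pp_class P = {Q. plane_poset Q \<and> card (car Q) = card (car P) \<and> code Q = code P}"
  unfolding pp_class_def
proof (rule Collect_cong)
  fix Q assume P: "plane_poset P"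
  show "(plane_poset Q \<and> pp_iso P Q) = (plane_poset Q \<and> card (car Q) = card (car P) \<and> code Q = code P)"
    using iso_code[OF P, of Q] by auto
qed

lemma rep_props: "plane_poset (rep c) \<and> ppc_set c = pp_class (rep c)"
proof -
  obtain P where P: "plane_poset P" "ppc_set c = pp_class P" using ppc_set[of c] by auto
  have "P \<in> pp_class P" using P(1) iso_refl unfolding pp_class_def by blast
  then have "rep c \<in> pp_class P" unfolding rep_def P(2) by (rule someI)
  then have r: "plane_poset (rep c)" "card (car (rep c)) = card (car P)" "code (rep c) = code P"
    using pp_class_code[OF P(1)] by auto
  then have "pp_class (rep c) = pp_class P" using pp_class_code[OF P(1)] pp_class_code[OF r(1)] by simp
  then show ?thesis using r P by simp
qed

lemma rep_plane: "plane_poset (rep c)" using rep_props by blast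

lemma class_of_rep: "class_of (rep c) = c"
proof -
  have "pp_class (rep c) = ppc_set c" using rep_props by simp
  then show ?thesis unfolding class_of_def by (simp add: ppc_set_inverse)
qed

lemma rep_class:
  assumes P: "plane_poset P"
  shows "card (car (rep (class_of P))) = card (car P) \<and> code (rep (class_of P)) = code P"
proof -
  have "ppc_set (class_of P) = pp_class P" unfolding class_of_def
    using P by (intro Abs_ppc_inverse) blast
  moreover have "P \<in> pp_class P" using P iso_refl unfolding pp_class_def by blast
  ultimately have "rep (class_of P) \<in> pp_class P" unfolding rep_def by (metis someI)
  then show ?thesis using pp_class_code[OF P] by auto
qed

lemma class_eq:
  assumes "card (car (rep c)) = card (car (rep d))" "code (rep c) = code (rep d)"
  shows "c = d"
proof -
  have "ppc_set c = ppc_set d" using rep_props[of c] rep_props[of d] assms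
      pp_class_code[OF rep_plane[of c]] pp_class_code[OF rep_plane[of d]] by simp
  then show ?thesis by (simp add: ppc_set_inject)
qed

lemma pair_class_left: "plane_poset P \<Longrightarrow> plane_poset Z \<Longrightarrow>
    pp_pair q (rep (class_of P)) Z = pp_pair q P Z"
proof -
  assume P: "plane_poset P" and Z: "plane_poset Z"
  have r: "card (car (rep (class_of P))) = card (car P)" "code (rep (class_of P)) = code P"
    using rep_class[OF P] by auto
  show ?thesis by (simp add: pp_pair_code[OF rep_plane Z] pp_pair_code[OF P Z] r)
qed

lemma pair_class_right: "plane_poset P \<Longrightarrow> plane_poset Z \<Longrightarrow>
    pp_pair q P (rep (class_of Z)) = pp_pair q P Z"
proof -
  assume P: "plane_poset P" and Z: "plane_poset Z"
  have r: "card (car (rep (class_of Z))) = card (car Z)" "code (rep (class_of Z)) = code Z"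
    using rep_class[OF Z] by auto
  show ?thesis by (simp add: pp_pair_code[OF P rep_plane] pp_pair_code[OF P Z] r)
qed

lemma pair_sym: "plane_poset P \<Longrightarrow> plane_poset Q \<Longrightarrow> pp_pair q P Q = pp_pair q Q P"
  using pp_pair_code[of P Q q] pp_pair_code[of Q P q] by (auto simp: Int_commute add.commute)

lemma tle_iota: "tle (iota P) = tle P"
  unfolding tle_def by (auto simp: fun_eq_iff)

lemma rk_iota: "rk (iota P) = rk P"
  unfolding rk_def tlt_def tle_iota by simp

lemma plane_iota: "plane_poset P \<Longrightarrow> plane_poset (iota P)"
  unfolding plane_poset_def iota_simps by blast

lemma code_iota:
  assumes P: "plane_poset P"
  shows "code (iota P) = {(i,j). i < j \<and> j < card (car P)} - code P"
proof
  have P': "plane_poset (iota P)" using plane_iota[OF P] .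
  show "code (iota P) \<subseteq> {(i,j). i < j \<and> j < card (car P)} - code P"
  proof
    fix p assume p: "p \<in> code (iota P)"
    then obtain i j where ij: "p = (i,j)" "(i,j) \<in> code (iota P)" by (cases p) auto
    obtain x y where xy: "x \<in> car P" "y \<in> car P" "i = rk P x" "j = rk P y" "lth (iota P) x y"
      using code_elem[OF P' ij(2)] rk_iota by auto
    then have "(x,y) \<in> relr P" "x \<noteq> y" unfolding lth_def by auto
    then show "p \<in> {(i,j). i < j \<and> j < card (car P)} - code P"
      using relr_code[OF P xy(1,2)] xy ij rk_bound[OF P] by auto
  qed
  show "{(i,j). i < j \<and> j < card (car P)} - code P \<subseteq> code (iota P)"
  proof
    fix p assume p: "p \<in> {(i,j). i < j \<and> j < card (car P)} - code P"
    then obtain i j where ij: "p = (i,j)" "i < j" "j < card (car P)" "(i,j) \<notin> code P" by (cases p) auto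
    obtain x y where xy: "x \<in> car P" "y \<in> car P" "rk P x = i" "rk P y = j"
      using rk_surj[OF P] ij by (metis order.strict_trans)
    have ne: "x \<noteq> y" using xy ij by auto
    have "(x,y) \<in> relr P" using relr_code[OF P xy(1,2) ne] xy ij by simp
    then have "lth (iota P) x y" unfolding lth_def using ne by simp
    then show "p \<in> code (iota P)" using code_mem[OF P', of x y] xy ij rk_iota by simp
  qed
qed


section \<open>Product\<close>

lemma img_even: "((u::nat),(v::nat)) \<in> (\<lambda>(x,y). (2*x, 2*y)) ` R \<longleftrightarrow> even u \<and> even v \<and> (u div 2, v div 2) \<in> R"
proof
  assume "even u \<and> even v \<and> (u div 2, v div 2) \<in> R"
  then show "(u,v) \<in> (\<lambda>(x,y). (2*x, 2*y)) ` R" by (intro image_eqI[where x="(u div 2, v div 2)"]) auto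
qed auto

lemma img_odd: "((u::nat),(v::nat)) \<in> (\<lambda>(x,y). (2*x+1, 2*y+1)) ` R \<longleftrightarrow> odd u \<and> odd v \<and> (u div 2, v div 2) \<in> R"
proof
  assume "odd u \<and> odd v \<and> (u div 2, v div 2) \<in> R"
  then show "(u,v) \<in> (\<lambda>(x,y). (2*x+1, 2*y+1)) ` R" by (intro image_eqI[where x="(u div 2, v div 2)"]) auto
qed auto

lemma img_even1: "(u::nat) \<in> (\<lambda>x. 2*x) ` A \<longleftrightarrow> even u \<and> u div 2 \<in> A"
proof
  assume "even u \<and> u div 2 \<in> A"
  then show "u \<in> (\<lambda>x. 2*x) ` A" by (intro image_eqI[where x="u div 2"]) auto
qed auto

lemma img_odd1: "(u::nat) \<in> (\<lambda>x. 2*x+1) ` A \<longleftrightarrow> odd u \<and> u div 2 \<in> A"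
proof
  assume "odd u \<and> u div 2 \<in> A"
  then show "u \<in> (\<lambda>x. 2*x+1) ` A" by (intro image_eqI[where x="u div 2"]) auto
qed auto

lemma cross_iff: "((u::nat),(v::nat)) \<in> {(2*x, 2*y+1) | x y. x \<in> A \<and> y \<in> B} \<longleftrightarrow> even u \<and> odd v \<and> u div 2 \<in> A \<and> v div 2 \<in> B"
proof
  assume "even u \<and> odd v \<and> u div 2 \<in> A \<and> v div 2 \<in> B"
  then show "(u,v) \<in> {(2*x, 2*y+1) | x y. x \<in> A \<and> y \<in> B}"
    by (intro CollectI exI[where x="u div 2"] exI[where x="v div 2"]) auto
qed auto

lemma car_prod: "u \<in> car (pp_prod P Q) \<longleftrightarrow> (even u \<and> u div 2 \<in> car P) \<or> (odd u \<and> u div 2 \<in> car Q)"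
  unfolding pp_prod_def car_def using img_even1 img_odd1 by auto

lemma relh_prod: "(u,v) \<in> relh (pp_prod P Q) \<longleftrightarrow>
   (even u \<and> even v \<and> (u div 2, v div 2) \<in> relh P) \<or> (odd u \<and> odd v \<and> (u div 2, v div 2) \<in> relh Q)"
  unfolding pp_prod_def relh_def using img_even img_odd by auto

lemma relr_prod: "(u,v) \<in> relr (pp_prod P Q) \<longleftrightarrow>
   (even u \<and> even v \<and> (u div 2, v div 2) \<in> relr P) \<or> (odd u \<and> odd v \<and> (u div 2, v div 2) \<in> relr Q)
   \<or> (even u \<and> odd v \<and> u div 2 \<in> car P \<and> v div 2 \<in> car Q)"
  unfolding pp_prod_def relr_def car_def using img_even img_odd cross_iff by auto

lemma div2_eq: "even u = even v \<Longrightarrow> u div 2 = v div 2 \<Longrightarrow> u = (v::nat)"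
  by (metis div_mult_mod_eq mod2_eq_if)

lemma plane_prod:
  assumes P: "plane_poset P" and Q: "plane_poset Q"
  shows "plane_poset (pp_prod P Q)"
proof -
  let ?R = "pp_prod P Q"
  have fin: "finite (car ?R)" using pp_basic(1)[OF P] pp_basic(1)[OF Q] by (simp add: pp_prod_def car_def)
  have hs: "relh ?R \<subseteq> car ?R \<times> car ?R"
    using hsub[OF P] hsub[OF Q] by (auto simp: relh_prod car_prod)
  have rs: "relr ?R \<subseteq> car ?R \<times> car ?R"
    using rsub[OF P] rsub[OF Q] by (auto simp: relr_prod car_prod)
  have hrf: "refl_on (car ?R) (relh ?R)"
    using hrefl[OF P] hrefl[OF Q] by (auto simp: refl_on_def relh_prod car_prod)
  have rrf: "refl_on (car ?R) (relr ?R)"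
    using rrefl[OF P] rrefl[OF Q] by (auto simp: refl_on_def relr_prod car_prod)
  have ht: "trans (relh ?R)"
  proof (rule transI)
    fix x y z assume "(x,y) \<in> relh ?R" "(y,z) \<in> relh ?R"
    then show "(x,z) \<in> relh ?R" using htrans[OF P] htrans[OF Q] by (auto simp: relh_prod)
  qed
  have rt: "trans (relr ?R)"
  proof (rule transI)
    fix x y z assume a: "(x,y) \<in> relr ?R" "(y,z) \<in> relr ?R"
    show "(x,z) \<in> relr ?R" using a rtrans[OF P] rtrans[OF Q] rsub[OF P] rsub[OF Q]
      unfolding relr_prod by blast
  qed
  have ha: "antisym (relh ?R)"
  proof (rule antisymI)
    fix x y assume "(x,y) \<in> relh ?R" "(y,x) \<in> relh ?R"
    then show "x = y" using hanti[OF P] hanti[OF Q] div2_eq unfolding relh_prod by metis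
  qed
  have ra: "antisym (relr ?R)"
  proof (rule antisymI)
    fix x y assume "(x,y) \<in> relr ?R" "(y,x) \<in> relr ?R"
    then show "x = y" using ranti[OF P] ranti[OF Q] div2_eq unfolding relr_prod by metis
  qed
  have cond: "((x,y) \<in> relh ?R \<or> (y,x) \<in> relh ?R) \<longleftrightarrow> \<not> ((x,y) \<in> relr ?R \<or> (y,x) \<in> relr ?R)"
    if x: "x \<in> car ?R" and y: "y \<in> car ?R" and ne: "x \<noteq> y" for x y
  proof (cases "even x = even y")
    case True
    then have nd: "x div 2 \<noteq> y div 2" using ne div2_eq by blast
    show ?thesis
    proof (cases "even x")
      case True
      then have "x div 2 \<in> car P" "y div 2 \<in> car P" "even y" using x y \<open>even x = even y\<close> by (auto simp: car_prod)
      then show ?thesis using pp_cond[OF P _ _ nd] True unfolding relh_prod relr_prod by auto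
    next
      case False
      then have "x div 2 \<in> car Q" "y div 2 \<in> car Q" "odd y" using x y \<open>even x = even y\<close> by (auto simp: car_prod)
      then show ?thesis using pp_cond[OF Q _ _ nd] False unfolding relh_prod relr_prod by auto
    qed
  next
    case False
    then show ?thesis using x y unfolding relh_prod relr_prod car_prod by auto
  qed
  show ?thesis unfolding plane_poset_def partial_order_on_def preorder_on_def
    using fin hs rs hrf rrf ht rt ha ra cond by blast
qed


lemma tle_prod: "tle (pp_prod P Q) u v \<longleftrightarrow>
   (even u \<and> even v \<and> tle P (u div 2) (v div 2)) \<or> (odd u \<and> odd v \<and> tle Q (u div 2) (v div 2))
   \<or> (even u \<and> odd v \<and> u div 2 \<in> car P \<and> v div 2 \<in> car Q)"
  unfolding tle_def relh_prod relr_prod by auto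

lemma card_prod:
  assumes P: "plane_poset P" and Q: "plane_poset Q"
  shows "card (car (pp_prod P Q)) = card (car P) + card (car Q)"
proof -
  have "car (pp_prod P Q) = (\<lambda>x. 2*x) ` car P \<union> (\<lambda>x. 2*x+1) ` car Q" by (simp add: pp_prod_def car_def)
  moreover have "(\<lambda>x. 2*x) ` car P \<inter> (\<lambda>x. 2*x+1) ` car Q = {}" by auto presburger
  moreover have "card ((\<lambda>x::nat. 2*x) ` car P) = card (car P)" by (rule card_image) (auto simp: inj_on_def)
  moreover have "card ((\<lambda>x::nat. 2*x+1) ` car Q) = card (car Q)" by (rule card_image) (auto simp: inj_on_def)
  ultimately show ?thesis using pp_basic(1)[OF P] pp_basic(1)[OF Q] by (simp add: card_Un_disjoint)
qed

lemma rk_prod_even: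
  assumes P: "plane_poset P" and Q: "plane_poset Q" and x: "x \<in> car P"
  shows "rk (pp_prod P Q) (2*x) = rk P x"
proof -
  have "{w \<in> car (pp_prod P Q). tlt (pp_prod P Q) w (2*x)} = (\<lambda>y. 2*y) ` {y \<in> car P. tlt P y x}"
  proof
    show "{w \<in> car (pp_prod P Q). tlt (pp_prod P Q) w (2*x)} \<subseteq> (\<lambda>y. 2*y) ` {y \<in> car P. tlt P y x}"
    proof
      fix w assume w: "w \<in> {w \<in> car (pp_prod P Q). tlt (pp_prod P Q) w (2*x)}"
      then have e: "even w" "tle P (w div 2) x" "w div 2 \<noteq> x" "w div 2 \<in> car P"
        unfolding tlt_def tle_prod car_prod by auto
      then show "w \<in> (\<lambda>y. 2*y) ` {y \<in> car P. tlt P y x}"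
        unfolding tlt_def by (intro image_eqI[where x="w div 2"]) auto
    qed
  next
    show "(\<lambda>y. 2*y) ` {y \<in> car P. tlt P y x} \<subseteq> {w \<in> car (pp_prod P Q). tlt (pp_prod P Q) w (2*x)}"
      unfolding tlt_def tle_prod car_prod by auto
  qed
  moreover have "card ((\<lambda>y::nat. 2*y) ` {y \<in> car P. tlt P y x}) = card {y \<in> car P. tlt P y x}"
    by (rule card_image) (auto simp: inj_on_def)
  ultimately show ?thesis unfolding rk_def by simp
qed

lemma rk_prod_odd:
  assumes P: "plane_poset P" and Q: "plane_poset Q" and y: "y \<in> car Q"
  shows "rk (pp_prod P Q) (2*y+1) = card (car P) + rk Q y"
proof -
  have "{w \<in> car (pp_prod P Q). tlt (pp_prod P Q) w (2*y+1)} =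
        (\<lambda>x. 2*x) ` car P \<union> (\<lambda>z. 2*z+1) ` {z \<in> car Q. tlt Q z y}"
  proof
    show "{w \<in> car (pp_prod P Q). tlt (pp_prod P Q) w (2*y+1)} \<subseteq>
        (\<lambda>x. 2*x) ` car P \<union> (\<lambda>z. 2*z+1) ` {z \<in> car Q. tlt Q z y}"
    proof
      fix w assume w: "w \<in> {w \<in> car (pp_prod P Q). tlt (pp_prod P Q) w (2*y+1)}"
      show "w \<in> (\<lambda>x. 2*x) ` car P \<union> (\<lambda>z. 2*z+1) ` {z \<in> car Q. tlt Q z y}"
      proof (cases "even w")
        case True
        then have "w div 2 \<in> car P" using w unfolding car_prod by auto
        then show ?thesis using True by (intro UnI1 image_eqI[where x="w div 2"]) auto
      next
        case False
        then have "tle Q (w div 2) y" "w div 2 \<noteq> y" "w div 2 \<in> car Q" using w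
          unfolding tlt_def tle_prod car_prod by auto
        then show ?thesis using False unfolding tlt_def by (intro UnI2 image_eqI[where x="w div 2"]) auto
      qed
    qed
  next
    show "(\<lambda>x. 2*x) ` car P \<union> (\<lambda>z. 2*z+1) ` {z \<in> car Q. tlt Q z y} \<subseteq>
        {w \<in> car (pp_prod P Q). tlt (pp_prod P Q) w (2*y+1)}"
      using y unfolding tlt_def tle_prod car_prod by (auto) (presburger+)
  qed
  moreover have "(\<lambda>x. 2*x) ` car P \<inter> (\<lambda>z. 2*z+1) ` {z \<in> car Q. tlt Q z y} = {}" by auto presburger
  moreover have "card ((\<lambda>x::nat. 2*x) ` car P) = card (car P)" by (rule card_image) (auto simp: inj_on_def)
  moreover have "card ((\<lambda>x::nat. 2*x+1) ` {z \<in> car Q. tlt Q z y}) = card {z \<in> car Q. tlt Q z y}"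
    by (rule card_image) (auto simp: inj_on_def)
  ultimately show ?thesis unfolding rk_def using pp_basic(1)[OF P] pp_basic(1)[OF Q]
    by (simp add: card_Un_disjoint)
qed

definition shp :: "nat \<Rightarrow> nat \<times> nat \<Rightarrow> nat \<times> nat" where
  "shp k = (\<lambda>(i,j). (i + k, j + k))"

lemma code_prod:
  assumes P: "plane_poset P" and Q: "plane_poset Q"
  shows "code (pp_prod P Q) = code P \<union> shp (card (car P)) ` code Q"
proof -
  let ?R = "pp_prod P Q"
  have R: "plane_poset ?R" using plane_prod[OF P Q] .
  have lth_R: "lth ?R u v \<longleftrightarrow> (even u \<and> even v \<and> lth P (u div 2) (v div 2)) \<or> (odd u \<and> odd v \<and> lth Q (u div 2) (v div 2))"
    for u v unfolding lth_def relh_prod using div2_eq by blast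
  show ?thesis
  proof
    show "code ?R \<subseteq> code P \<union> shp (card (car P)) ` code Q"
    proof
      fix p assume p: "p \<in> code ?R"
      then obtain i j where ij: "p = (i,j)" "(i,j) \<in> code ?R" by (cases p) auto
      obtain u v where uv: "u \<in> car ?R" "v \<in> car ?R" "i = rk ?R u" "j = rk ?R v" "lth ?R u v"
        by (rule code_elem[OF R ij(2)])
      show "p \<in> code P \<union> shp (card (car P)) ` code Q"
      proof (cases "even u")
        case True
        then have a: "even v" "lth P (u div 2) (v div 2)" using uv lth_R by auto
        then have c: "u div 2 \<in> car P" "v div 2 \<in> car P" using lth_car[OF P] by auto
        have "u = 2 * (u div 2)" "v = 2 * (v div 2)" using True a by auto
        then have "i = rk P (u div 2)" "j = rk P (v div 2)" using uv rk_prod_even[OF P Q] c by metis+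
        then show ?thesis using code_mem[OF P c] a ij by simp
      next
        case False
        then have a: "odd v" "lth Q (u div 2) (v div 2)" using uv lth_R by auto
        then have c: "u div 2 \<in> car Q" "v div 2 \<in> car Q" using lth_car[OF Q] by auto
        have "u = 2 * (u div 2) + 1" "v = 2 * (v div 2) + 1" using False a by auto
        then have "i = card (car P) + rk Q (u div 2)" "j = card (car P) + rk Q (v div 2)"
          using uv rk_prod_odd[OF P Q] c by metis+
        moreover have "(rk Q (u div 2), rk Q (v div 2)) \<in> code Q" using code_mem[OF Q c] a by simp
        ultimately show ?thesis using ij unfolding shp_def
          by (intro UnI2 image_eqI[where x="(rk Q (u div 2), rk Q (v div 2))"]) auto
      qed
    qed
    show "code P \<union> shp (card (car P)) ` code Q \<subseteq> code ?R"
    proof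
      fix p assume p: "p \<in> code P \<union> shp (card (car P)) ` code Q"
      show "p \<in> code ?R"
      proof (cases "p \<in> code P")
        case True
        then obtain i j where ij: "p = (i,j)" "(i,j) \<in> code P" by (cases p) auto
        obtain x y where xy: "x \<in> car P" "y \<in> car P" "i = rk P x" "j = rk P y" "lth P x y"
          by (rule code_elem[OF P ij(2)])
        have c: "2*x \<in> car ?R" "2*y \<in> car ?R" using xy unfolding car_prod by auto
        have "lth ?R (2*x) (2*y)" using lth_R xy by simp
        then show ?thesis using code_mem[OF R c] rk_prod_even[OF P Q] xy ij by simp
      next
        case False
        then obtain i j where ij: "p = shp (card (car P)) (i,j)" "(i,j) \<in> code Q" using p by auto
        obtain x y where xy: "x \<in> car Q" "y \<in> car Q" "i = rk Q x" "j = rk Q y" "lth Q x y"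
          by (rule code_elem[OF Q ij(2)])
        have c: "2*x+1 \<in> car ?R" "2*y+1 \<in> car ?R" using xy unfolding car_prod by auto
        have "lth ?R (2*x+1) (2*y+1)" using lth_R xy by simp
        then show ?thesis using code_mem[OF R c] rk_prod_odd[OF P Q] xy ij by (simp add: shp_def add.commute)
      qed
    qed
  qed
qed

lemma finite_code: "plane_poset P \<Longrightarrow> finite (code P)"
proof -
  assume P: "plane_poset P"
  have "code P \<subseteq> {..<card (car P)} \<times> {..<card (car P)}" using code_sub[OF P] by fastforce
  then show ?thesis by (rule finite_subset) auto
qed

lemma card_code_prod:
  assumes P: "plane_poset P" and Q: "plane_poset Q"
  shows "card (code (pp_prod P Q)) = card (code P) + card (code Q)"
proof -
  have fP: "finite (code P)" using finite_code[OF P] .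
  have fQ: "finite (code Q)" using finite_code[OF Q] .
  have d: "code P \<inter> shp (card (car P)) ` code Q = {}" using code_sub[OF P] by (auto simp: shp_def)
  have "inj_on (shp (card (car P))) (code Q)" by (auto simp: inj_on_def shp_def)
  then have "card (shp (card (car P)) ` code Q) = card (code Q)" by (rule card_image)
  then show ?thesis unfolding code_prod[OF P Q] using fP fQ d by (simp add: card_Un_disjoint)
qed


section \<open>Restriction and biideals\<close>

lemma restr_simps [simp]: "car (restr Z S) = S" "relh (restr Z S) = relh Z \<inter> S \<times> S"
  "relr (restr Z S) = relr Z \<inter> S \<times> S"
  by (simp_all add: restr_def car_def relh_def relr_def)

lemma plane_restr:
  assumes Z: "plane_poset Z" and S: "S \<subseteq> car Z"
  shows "plane_poset (restr Z S)"
proof -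
  have fin: "finite S" using pp_basic(1)[OF Z] S finite_subset by blast
  have po: "partial_order_on S (relh Z \<inter> S \<times> S)" "partial_order_on S (relr Z \<inter> S \<times> S)"
    unfolding partial_order_on_def preorder_on_def refl_on_def trans_def antisym_def
    using S hrefl[OF Z] rrefl[OF Z] htrans[OF Z] rtrans[OF Z] hanti[OF Z] ranti[OF Z]
    by (auto simp: subset_iff)
  have cond: "\<forall>x\<in>S. \<forall>y\<in>S. x \<noteq> y \<longrightarrow>
        (((x,y) \<in> relh Z \<inter> S \<times> S \<or> (y,x) \<in> relh Z \<inter> S \<times> S) \<longleftrightarrow>
         \<not> ((x,y) \<in> relr Z \<inter> S \<times> S \<or> (y,x) \<in> relr Z \<inter> S \<times> S))"
    using pp_cond[OF Z] S by blast
  show ?thesis unfolding plane_poset_def restr_simps using fin po cond by blast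
qed

lemma tle_restr: "tle (restr Z S) x y \<longleftrightarrow> x \<in> S \<and> y \<in> S \<and> tle Z x y"
  unfolding tle_def by auto

lemma lth_restr: "lth (restr Z S) x y \<longleftrightarrow> x \<in> S \<and> y \<in> S \<and> lth Z x y"
  unfolding lth_def by auto

definition lowset :: "ppos \<Rightarrow> nat \<Rightarrow> nat set" where
  "lowset Z k = {x \<in> car Z. rk Z x < k}"
definition highset :: "ppos \<Rightarrow> nat \<Rightarrow> nat set" where
  "highset Z k = {x \<in> car Z. k \<le> rk Z x}"

lemma card_lowset:
  assumes Z: "plane_poset Z" and k: "k \<le> card (car Z)"
  shows "card (lowset Z k) = k"
proof -
  have "rk Z ` lowset Z k = {..<k}"
  proof
    show "rk Z ` lowset Z k \<subseteq> {..<k}" unfolding lowset_def by auto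
    show "{..<k} \<subseteq> rk Z ` lowset Z k"
    proof
      fix i assume "i \<in> {..<k}"
      then obtain x where "x \<in> car Z" "rk Z x = i" using rk_surj[OF Z, of i] k by auto
      then have "x \<in> lowset Z k" using \<open>i \<in> {..<k}\<close> unfolding lowset_def by auto
      then show "i \<in> rk Z ` lowset Z k" using \<open>rk Z x = i\<close> by blast
    qed
  qed
  moreover have "inj_on (rk Z) (lowset Z k)"
  proof (rule inj_onI)
    fix x y assume "x \<in> lowset Z k" "y \<in> lowset Z k" "rk Z x = rk Z y"
    then show "x = y" using rk_inj[OF Z] unfolding lowset_def by blast
  qed
  ultimately show ?thesis using card_image[of "rk Z" "lowset Z k"] by simp
qed

lemma low_high: "car Z - highset Z k = lowset Z k"
  unfolding lowset_def highset_def by auto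

lemma card_highset:
  assumes Z: "plane_poset Z" and k: "k \<le> card (car Z)"
  shows "card (highset Z k) = card (car Z) - k"
proof -
  have "car Z = lowset Z k \<union> highset Z k" "lowset Z k \<inter> highset Z k = {}"
    unfolding lowset_def highset_def by auto
  then have "card (car Z) = card (lowset Z k) + card (highset Z k)"
  proof -
    have "finite (lowset Z k)" "finite (highset Z k)" using pp_basic(1)[OF Z] unfolding lowset_def highset_def by auto
    then show ?thesis using \<open>car Z = lowset Z k \<union> highset Z k\<close> \<open>lowset Z k \<inter> highset Z k = {}\<close>
      by (simp add: card_Un_disjoint)
  qed
  then show ?thesis using card_lowset[OF Z k] by simp
qed

lemma rk_low:
  assumes Z: "plane_poset Z" and x: "x \<in> lowset Z k"
  shows "rk (restr Z (lowset Z k)) x = rk Z x"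
proof -
  have "{y \<in> lowset Z k. tlt (restr Z (lowset Z k)) y x} = {y \<in> car Z. tlt Z y x}"
  proof
    show "{y \<in> lowset Z k. tlt (restr Z (lowset Z k)) y x} \<subseteq> {y \<in> car Z. tlt Z y x}"
      unfolding lowset_def tlt_def tle_restr by blast
    show "{y \<in> car Z. tlt Z y x} \<subseteq> {y \<in> lowset Z k. tlt (restr Z (lowset Z k)) y x}"
    proof
      fix y assume y: "y \<in> {y \<in> car Z. tlt Z y x}"
      then have "rk Z y < rk Z x" using rk_less[OF Z] by blast
      then have "y \<in> lowset Z k" using x y unfolding lowset_def by auto
      then show "y \<in> {y \<in> lowset Z k. tlt (restr Z (lowset Z k)) y x}"
        using x y unfolding tlt_def tle_restr by blast
    qed
  qed
  then show ?thesis unfolding rk_def by simp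
qed

lemma rk_high:
  assumes Z: "plane_poset Z" and x: "x \<in> highset Z k" and k: "k \<le> card (car Z)"
  shows "rk (restr Z (highset Z k)) x = rk Z x - k"
proof -
  have xc: "x \<in> car Z" "k \<le> rk Z x" using x unfolding highset_def by auto
  have "{y \<in> car Z. tlt Z y x} = lowset Z k \<union> {y \<in> highset Z k. tlt Z y x}"
  proof
    show "{y \<in> car Z. tlt Z y x} \<subseteq> lowset Z k \<union> {y \<in> highset Z k. tlt Z y x}"
      unfolding lowset_def highset_def by auto
    show "lowset Z k \<union> {y \<in> highset Z k. tlt Z y x} \<subseteq> {y \<in> car Z. tlt Z y x}"
    proof
      fix y assume "y \<in> lowset Z k \<union> {y \<in> highset Z k. tlt Z y x}"
      then consider "y \<in> lowset Z k" | "y \<in> {y \<in> highset Z k. tlt Z y x}" by blast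
      then show "y \<in> {y \<in> car Z. tlt Z y x}"
      proof cases
        case 1
        then have "y \<in> car Z" "rk Z y < rk Z x" using xc unfolding lowset_def by auto
        then show ?thesis using rk_less_iff[OF Z _ xc(1)] by blast
      qed (auto simp: highset_def)
    qed
  qed
  moreover have "lowset Z k \<inter> {y \<in> highset Z k. tlt Z y x} = {}" unfolding lowset_def highset_def by auto
  moreover have "finite (car Z)" using pp_basic(1)[OF Z] .
  moreover have "finite (lowset Z k)" "finite {y \<in> highset Z k. tlt Z y x}"
    using pp_basic(1)[OF Z] unfolding lowset_def highset_def by auto
  ultimately have "rk Z x = card (lowset Z k) + card {y \<in> highset Z k. tlt Z y x}"
    unfolding rk_def by (simp add: card_Un_disjoint)
  then have "rk Z x = k + card {y \<in> highset Z k. tlt Z y x}" using card_lowset[OF Z k] by simp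
  moreover have "{y \<in> highset Z k. tlt (restr Z (highset Z k)) y x} = {y \<in> highset Z k. tlt Z y x}"
    using x unfolding tlt_def tle_restr by auto
  ultimately show ?thesis unfolding rk_def by simp
qed


lemma low_sub: "lowset Z k \<subseteq> car Z" unfolding lowset_def by auto
lemma high_sub: "highset Z k \<subseteq> car Z" unfolding highset_def by auto

lemma code_low:
  assumes Z: "plane_poset Z"
  shows "code (restr Z (lowset Z k)) = {(i,j) \<in> code Z. j < k}"
proof
  let ?R = "restr Z (lowset Z k)"
  have R: "plane_poset ?R" using plane_restr[OF Z low_sub] .
  show "code ?R \<subseteq> {(i,j) \<in> code Z. j < k}"
  proof
    fix p assume "p \<in> code ?R"
    then obtain i j where ij: "p = (i,j)" "(i,j) \<in> code ?R" by (cases p) auto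
    obtain x y where xy: "x \<in> lowset Z k" "y \<in> lowset Z k" "i = rk ?R x" "j = rk ?R y" "lth ?R x y"
      using code_elem[OF R ij(2)] by auto
    have xy': "x \<in> car Z" "y \<in> car Z" "lth Z x y" "rk Z y < k" using xy lth_restr unfolding lowset_def by auto
    have "i = rk Z x" "j = rk Z y" using xy rk_low[OF Z] by auto
    then show "p \<in> {(i,j) \<in> code Z. j < k}" using code_mem[OF Z xy'(1,2)] xy' ij by auto
  qed
  show "{(i,j) \<in> code Z. j < k} \<subseteq> code ?R"
  proof
    fix p assume "p \<in> {(i,j) \<in> code Z. j < k}"
    then obtain i j where ij: "p = (i,j)" "(i,j) \<in> code Z" "j < k" by (cases p) auto
    obtain x y where xy: "x \<in> car Z" "y \<in> car Z" "i = rk Z x" "j = rk Z y" "lth Z x y"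
      by (rule code_elem[OF Z ij(2)])
    have "rk Z x < rk Z y" using rk_less[OF Z] lth_tlt xy by blast
    then have L: "x \<in> lowset Z k" "y \<in> lowset Z k" using xy ij unfolding lowset_def by auto
    then have "lth ?R x y" using xy lth_restr by blast
    then show "p \<in> code ?R" using code_mem[OF R] L rk_low[OF Z] xy ij by simp
  qed
qed

lemma code_high:
  assumes Z: "plane_poset Z" and k: "k \<le> card (car Z)"
  shows "code (restr Z (highset Z k)) = (\<lambda>(i,j). (i - k, j - k)) ` {(i,j) \<in> code Z. k \<le> i}"
proof
  let ?R = "restr Z (highset Z k)"
  have R: "plane_poset ?R" using plane_restr[OF Z high_sub] .
  show "code ?R \<subseteq> (\<lambda>(i,j). (i - k, j - k)) ` {(i,j) \<in> code Z. k \<le> i}"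
  proof
    fix p assume "p \<in> code ?R"
    then obtain i j where ij: "p = (i,j)" "(i,j) \<in> code ?R" by (cases p) auto
    obtain x y where xy: "x \<in> highset Z k" "y \<in> highset Z k" "i = rk ?R x" "j = rk ?R y" "lth ?R x y"
      using code_elem[OF R ij(2)] by auto
    have xy': "x \<in> car Z" "y \<in> car Z" "lth Z x y" "k \<le> rk Z x" using xy lth_restr unfolding highset_def by auto
    have "i = rk Z x - k" "j = rk Z y - k" using xy rk_high[OF Z _ k] by auto
    moreover have "(rk Z x, rk Z y) \<in> {(i,j) \<in> code Z. k \<le> i}" using code_mem[OF Z xy'(1,2)] xy' by auto
    ultimately show "p \<in> (\<lambda>(i,j). (i - k, j - k)) ` {(i,j) \<in> code Z. k \<le> i}"
      using ij by (intro image_eqI[where x="(rk Z x, rk Z y)"]) auto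
  qed
  show "(\<lambda>(i,j). (i - k, j - k)) ` {(i,j) \<in> code Z. k \<le> i} \<subseteq> code ?R"
  proof
    fix p assume "p \<in> (\<lambda>(i,j). (i - k, j - k)) ` {(i,j) \<in> code Z. k \<le> i}"
    then obtain i j where ij: "p = (i - k, j - k)" "(i,j) \<in> code Z" "k \<le> i" by auto
    obtain x y where xy: "x \<in> car Z" "y \<in> car Z" "i = rk Z x" "j = rk Z y" "lth Z x y"
      by (rule code_elem[OF Z ij(2)])
    have "rk Z x < rk Z y" using rk_less[OF Z] lth_tlt xy by blast
    then have H: "x \<in> highset Z k" "y \<in> highset Z k" using xy ij unfolding highset_def by auto
    then have "lth ?R x y" using xy lth_restr by blast
    then show "p \<in> code ?R" using code_mem[OF R, of x y] rk_high[OF Z _ k] H xy ij by simp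
  qed
qed

lemma biideal_high:
  assumes Z: "plane_poset Z"
  shows "biideal Z (highset Z k)"
  unfolding biideal_def
proof (intro conjI ballI impI)
  show "highset Z k \<subseteq> car Z" by (rule high_sub)
  fix x y assume x: "x \<in> highset Z k" and y: "y \<in> car Z" and r: "(x,y) \<in> relh Z \<or> (x,y) \<in> relr Z"
  have "tle Z x y" using r unfolding tle_def by blast
  then have "rk Z x \<le> rk Z y" using tlt_iff_rk[OF Z] x y high_sub by blast
  then show "y \<in> highset Z k" using x y unfolding highset_def by auto
qed

lemma biideal_unique:
  assumes Z: "plane_poset Z" and I: "biideal Z I" and J: "biideal Z J" and c: "card I = card J"
  shows "I = J"
proof -
  have IJ: "I \<subseteq> car Z" "J \<subseteq> car Z" using I J unfolding biideal_def by auto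
  have fin: "finite I" "finite J" using IJ pp_basic(1)[OF Z] finite_subset by blast+
  have "I \<subseteq> J \<or> J \<subseteq> I"
  proof (rule ccontr)
    assume "\<not> (I \<subseteq> J \<or> J \<subseteq> I)"
    then obtain x y where xy: "x \<in> I" "x \<notin> J" "y \<in> J" "y \<notin> I" by blast
    have "tle Z x y \<or> tle Z y x" using tle_total[OF Z] xy IJ by blast
    then show False
    proof
      assume "tle Z x y"
      then have "y \<in> I" using I xy IJ unfolding biideal_def tle_def by blast
      then show False using xy by simp
    next
      assume "tle Z y x"
      then have "x \<in> J" using J xy IJ unfolding biideal_def tle_def by blast
      then show False using xy by simp
    qed
  qed
  then show ?thesis using fin c by (metis card_subset_eq)
qed

lemma hp_restr: "S \<subseteq> car Z \<Longrightarrow> hp (restr Z S) = hp Z \<inter> S \<times> S"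
  unfolding hp_def lth_restr by auto

lemma finite_hp: "plane_poset Z \<Longrightarrow> finite (hp Z)"
proof -
  assume Z: "plane_poset Z"
  have "hp Z \<subseteq> car Z \<times> car Z" unfolding hp_def by auto
  then show ?thesis using pp_basic(1)[OF Z] finite_subset by blast
qed

lemma exponent:
  assumes Z: "plane_poset Z" and I: "biideal Z I"
  shows "hcount Z (car Z - I) I + card (hp (restr Z (car Z - I))) + card (hp (restr Z I)) = card (hp Z)"
proof -
  let ?A = "car Z - I"
  have Isub: "I \<subseteq> car Z" using I unfolding biideal_def by auto
  have e: "hp Z = (hp Z \<inter> ?A \<times> I) \<union> (hp Z \<inter> ?A \<times> ?A) \<union> (hp Z \<inter> I \<times> I)"
  proof
    show "hp Z \<subseteq> (hp Z \<inter> ?A \<times> I) \<union> (hp Z \<inter> ?A \<times> ?A) \<union> (hp Z \<inter> I \<times> I)"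
    proof
      fix p assume p: "p \<in> hp Z"
      then obtain x y where xy: "p = (x,y)" "x \<in> car Z" "y \<in> car Z" "(x,y) \<in> relh Z" unfolding hp_def lth_def by auto
      have "x \<in> I \<Longrightarrow> y \<in> I" using I xy unfolding biideal_def by blast
      then show "p \<in> (hp Z \<inter> ?A \<times> I) \<union> (hp Z \<inter> ?A \<times> ?A) \<union> (hp Z \<inter> I \<times> I)" using p xy by auto
    qed
  qed auto
  have f: "finite (hp Z)" using finite_hp[OF Z] .
  have "card (hp Z) = card (hp Z \<inter> ?A \<times> I) + card (hp Z \<inter> ?A \<times> ?A) + card (hp Z \<inter> I \<times> I)"
    by (subst e, subst card_Un_disjoint, use f in auto, subst card_Un_disjoint, use f in auto)
  moreover have "hcount Z ?A I = card (hp Z \<inter> ?A \<times> I)"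
    unfolding hcount_def hp_def using Isub by (intro arg_cong[where f=card]) auto
  ultimately show ?thesis using hp_restr[of ?A Z] hp_restr[OF Isub] by simp
qed


section \<open>Hopf compatibility at the level of posets\<close>

lemma finite_biideals: "plane_poset Z \<Longrightarrow> finite {I. biideal Z I}"
proof -
  assume Z: "plane_poset Z"
  have "{I. biideal Z I} \<subseteq> Pow (car Z)" unfolding biideal_def by auto
  then show ?thesis using pp_basic(1)[OF Z] finite_subset by blast
qed

lemma disj_equiv:
  assumes P: "plane_poset P" and Q: "plane_poset Q" and Z: "plane_poset Z"
    and k: "k = card (car P)" and kn: "k \<le> card (car Z)"
  shows "(code P \<union> shp k ` code Q) \<inter> code Z = {} \<longleftrightarrow>
     code P \<inter> code (restr Z (lowset Z k)) = {} \<and> code Q \<inter> code (restr Z (highset Z k)) = {}"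
proof -
  let ?CL = "code (restr Z (lowset Z k))" and ?CH = "code (restr Z (highset Z k))"
  have CL: "?CL = {(i,j) \<in> code Z. j < k}" using code_low[OF Z] .
  have CH: "?CH = (\<lambda>(i,j). (i - k, j - k)) ` {(i,j) \<in> code Z. k \<le> i}" using code_high[OF Z kn] .
  show ?thesis
  proof
    assume h: "(code P \<union> shp k ` code Q) \<inter> code Z = {}"
    have 1: "code P \<inter> ?CL = {}" using h unfolding CL by auto
    have 2: "code Q \<inter> ?CH = {}"
    proof (rule ccontr)
      assume "code Q \<inter> ?CH \<noteq> {}"
      then obtain a b where ab: "(a,b) \<in> code Q" "(a,b) \<in> ?CH" by auto
      then obtain i j where ij: "(i,j) \<in> code Z" "k \<le> i" "a = i - k" "b = j - k" unfolding CH by auto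
      have "i < j" using code_sub[OF Z ij(1)] by simp
      then have "(i,j) = shp k (a,b)" using ij unfolding shp_def by auto
      then show False using h ab ij by auto
    qed
    show "code P \<inter> ?CL = {} \<and> code Q \<inter> ?CH = {}" using 1 2 by simp
  next
    assume h: "code P \<inter> ?CL = {} \<and> code Q \<inter> ?CH = {}"
    show "(code P \<union> shp k ` code Q) \<inter> code Z = {}"
    proof (rule ccontr)
      assume "(code P \<union> shp k ` code Q) \<inter> code Z \<noteq> {}"
      then obtain a b where ab: "(a,b) \<in> code Z" "(a,b) \<in> code P \<union> shp k ` code Q" by auto
      show False
      proof (cases "(a,b) \<in> code P")
        case True
        then have "b < k" using code_sub[OF P] k by blast
        then show ?thesis using h True ab unfolding CL by auto
      next
        case False
        then obtain c d where cd: "(c,d) \<in> code Q" "a = c + k" "b = d + k" using ab unfolding shp_def by auto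
        have "(c,d) \<in> ?CH" unfolding CH
          using cd ab by (intro image_eqI[where x="(a,b)"]) auto
        then show ?thesis using h cd by auto
      qed
    qed
  qed
qed

lemma hopf_pp:
  assumes P: "plane_poset P" and Q: "plane_poset Q" and Z: "plane_poset Z"
  shows "pp_pair q (pp_prod P Q) Z = (\<Sum>I\<in>{I. biideal Z I}.
      q ^ (hcount Z (car Z - I) I) * pp_pair q P (restr Z (car Z - I)) * pp_pair q Q (restr Z I))"
proof -
  let ?f = "\<lambda>I. q ^ (hcount Z (car Z - I) I) * pp_pair q P (restr Z (car Z - I)) * pp_pair q Q (restr Z I)"
  have PQ: "plane_poset (pp_prod P Q)" using plane_prod[OF P Q] .
  have fin: "finite {I. biideal Z I}" using finite_biideals[OF Z] .
  have Isub: "\<And>I. biideal Z I \<Longrightarrow> I \<subseteq> car Z" unfolding biideal_def by auto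
  have cardsum: "\<And>I. biideal Z I \<Longrightarrow> card (car Z - I) + card I = card (car Z)"
    using Isub pp_basic(1)[OF Z] by (metis card_Diff_subset finite_subset le_add_diff_inverse2 card_mono)
  have pl1: "\<And>I. biideal Z I \<Longrightarrow> plane_poset (restr Z (car Z - I))" using plane_restr[OF Z] by blast
  have pl2: "\<And>I. biideal Z I \<Longrightarrow> plane_poset (restr Z I)" using plane_restr[OF Z] Isub by blast
  have zero: "?f I = 0" if I: "biideal Z I" and c: "card I \<noteq> card (car Q) \<or> card (car Z - I) \<noteq> card (car P)" for I
  proof -
    have "pp_pair q P (restr Z (car Z - I)) = 0 \<or> pp_pair q Q (restr Z I) = 0"
      using c pp_pair_code[OF P pl1[OF I], of q] pp_pair_code[OF Q pl2[OF I], of q] by auto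
    then show ?thesis by auto
  qed
  show ?thesis
  proof (cases "card (car P) + card (car Q) = card (car Z)")
    case False
    have "?f I = 0" if "I \<in> {I. biideal Z I}" for I using zero cardsum that False by force
    then have "(\<Sum>I\<in>{I. biideal Z I}. ?f I) = 0" by (intro sum.neutral) blast
    moreover have "pp_pair q (pp_prod P Q) Z = 0"
      using pp_pair_code[OF PQ Z] card_prod[OF P Q] False by simp
    ultimately show ?thesis by simp
  next
    case True
    define k where "k = card (car P)"
    have kn: "k \<le> card (car Z)" using True k_def by simp
    let ?H = "highset Z k" and ?L = "lowset Z k"
    have H: "biideal Z ?H" using biideal_high[OF Z] .
    have cH: "card ?H = card (car Q)" using card_highset[OF Z kn] True k_def by simp
    have LH: "car Z - ?H = ?L" by (rule low_high)
    have others: "?f I = 0" if "I \<in> {I. biideal Z I} - {?H}" for I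
    proof -
      have I: "biideal Z I" "I \<noteq> ?H" using that by auto
      then have "card I \<noteq> card (car Q)" using biideal_unique[OF Z I(1) H] cH by auto
      then show ?thesis using zero I by blast
    qed
    have "(\<Sum>I\<in>{I. biideal Z I}. ?f I) = ?f ?H + (\<Sum>I\<in>{I. biideal Z I} - {?H}. ?f I)"
      using fin H by (simp add: sum.remove)
    moreover have "(\<Sum>I\<in>{I. biideal Z I} - {?H}. ?f I) = 0" using others by (intro sum.neutral) blast
    ultimately have S: "(\<Sum>I\<in>{I. biideal Z I}. ?f I) = ?f ?H" by (simp only: add_0_right)
    have pL: "plane_poset (restr Z ?L)" using plane_restr[OF Z low_sub] .
    have pH: "plane_poset (restr Z ?H)" using plane_restr[OF Z high_sub] .
    have cL: "card ?L = k" using card_lowset[OF Z kn] .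
    have ex: "hcount Z ?L ?H + card (code (restr Z ?L)) + card (code (restr Z ?H)) = card (code Z)"
      using exponent[OF Z H] LH card_code[OF pL] card_code[OF pH] card_code[OF Z] by simp
    have D: "(code P \<union> shp k ` code Q) \<inter> code Z = {} \<longleftrightarrow>
     code P \<inter> code (restr Z ?L) = {} \<and> code Q \<inter> code (restr Z ?H) = {}"
      using disj_equiv[OF P Q Z k_def kn] .
    have lhs: "pp_pair q (pp_prod P Q) Z = (if (code P \<union> shp k ` code Q) \<inter> code Z = {}
        then q ^ (card (code P) + card (code Q) + card (code Z)) else 0)"
      unfolding pp_pair_code[OF PQ Z] code_prod[OF P Q] card_prod[OF P Q] True k_def
      using card_code_prod[OF P Q, unfolded code_prod[OF P Q]] by simp
    have r1: "pp_pair q P (restr Z ?L) = (if code P \<inter> code (restr Z ?L) = {}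
        then q ^ (card (code P) + card (code (restr Z ?L))) else 0)"
      unfolding pp_pair_code[OF P pL] restr_simps(1) cL k_def[symmetric] by simp
    have r2: "pp_pair q Q (restr Z ?H) = (if code Q \<inter> code (restr Z ?H) = {}
        then q ^ (card (code Q) + card (code (restr Z ?H))) else 0)"
      unfolding pp_pair_code[OF Q pH] restr_simps(1) cH by simp
    have "?f ?H = (if (code P \<union> shp k ` code Q) \<inter> code Z = {}
        then q ^ (card (code P) + card (code Q) + card (code Z)) else 0)"
    proof -
      have "?f ?H = q ^ (hcount Z ?L ?H) * pp_pair q P (restr Z ?L) * pp_pair q Q (restr Z ?H)"
        using LH by simp
      also have "\<dots> = (if (code P \<union> shp k ` code Q) \<inter> code Z = {}
        then q ^ (hcount Z ?L ?H + (card (code P) + card (code (restr Z ?L))) + (card (code Q) + card (code (restr Z ?H)))) else 0)"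
        unfolding r1 r2 D by (simp add: power_add)
      also have "\<dots> = (if (code P \<union> shp k ` code Q) \<inter> code Z = {}
        then q ^ (card (code P) + card (code Q) + card (code Z)) else 0)"
        using ex by (simp add: algebra_simps)
      finally show ?thesis .
    qed
    then show ?thesis using S lhs by simp
  qed
qed


section \<open>Linear algebra\<close>

definition lin :: "('a \<Rightarrow> 'k::field) \<Rightarrow> ('a \<Rightarrow>\<^sub>0 'k) \<Rightarrow> 'k" where
  "lin g x = (\<Sum>a\<in>Poly_Mapping.keys x. Poly_Mapping.lookup x a * g a)"

lemma lin_super:
  assumes "finite S" "Poly_Mapping.keys x \<subseteq> S"
  shows "lin g x = (\<Sum>a\<in>S. Poly_Mapping.lookup x a * g a)"
  unfolding lin_def
  by (rule sum.mono_neutral_left) (use assms in \<open>auto simp: not_in_keys_iff_lookup_eq_zero[symmetric]\<close>)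

lemma lin_add: "lin g (x + y) = lin g x + lin g y"
proof -
  let ?S = "Poly_Mapping.keys x \<union> Poly_Mapping.keys y"
  have f: "finite ?S" by simp
  have "lin g (x + y) = (\<Sum>a\<in>?S. Poly_Mapping.lookup (x + y) a * g a)"
    using keys_add[of x y] by (intro lin_super f)
  also have "\<dots> = (\<Sum>a\<in>?S. Poly_Mapping.lookup x a * g a) + (\<Sum>a\<in>?S. Poly_Mapping.lookup y a * g a)"
    by (simp add: lookup_add distrib_right sum.distrib)
  also have "\<dots> = lin g x + lin g y"
    using lin_super[OF f, of x g] lin_super[OF f, of y g] by auto
  finally show ?thesis .
qed

lemma lin_zero: "lin g 0 = 0"
  unfolding lin_def by simp

lemma lin_single: "lin g (Poly_Mapping.single c v) = v * g c"
  unfolding lin_def by simp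

lemma lin_sum: "finite A \<Longrightarrow> lin g (\<Sum>i\<in>A. f i) = (\<Sum>i\<in>A. lin g (f i))"
  by (induction A rule: finite_induct) (simp_all add: lin_zero lin_add)

lemma lookup_map_mult: "Poly_Mapping.lookup (Poly_Mapping.map (\<lambda>t. (c::'k::field) * t) x) a = c * Poly_Mapping.lookup x a"
  by (simp add: map.rep_eq when_def)

lemma lin_map: "lin g (Poly_Mapping.map (\<lambda>t. (c::'k::field) * t) x) = c * lin g x"
proof -
  have sub: "Poly_Mapping.keys (Poly_Mapping.map (\<lambda>t. c * t) x) \<subseteq> Poly_Mapping.keys x"
  proof
    fix a assume "a \<in> Poly_Mapping.keys (Poly_Mapping.map (\<lambda>t. c * t) x)"
    then have "c * Poly_Mapping.lookup x a \<noteq> 0" unfolding not_in_keys_iff_lookup_eq_zero[symmetric] lookup_map_mult[symmetric] by blast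
    then have "Poly_Mapping.lookup x a \<noteq> 0" by auto
    then show "a \<in> Poly_Mapping.keys x" using not_in_keys_iff_lookup_eq_zero by metis
  qed
  have "lin g (Poly_Mapping.map (\<lambda>t. c * t) x) = (\<Sum>a\<in>Poly_Mapping.keys x. c * Poly_Mapping.lookup x a * g a)"
    using lin_super[OF finite_keys sub] by (simp add: lookup_map_mult)
  then show ?thesis unfolding lin_def by (simp add: sum_distrib_left mult.assoc)
qed

abbreviation M :: "'k::field \<Rightarrow> ppc \<Rightarrow> ppc \<Rightarrow> 'k" where
  "M q a b \<equiv> pp_pair q (rep a) (rep b)"

lemma form_lin: "form q x y = lin (\<lambda>a. lin (\<lambda>b. M q a b) y) x"
  unfolding form_def lin_def by (simp add: sum_distrib_left mult.assoc mult.left_commute)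

lemma form_basis: "form q x (basis e) = lin (\<lambda>a. M q a e) x"
  unfolding form_lin basis_def lin_single by simp

lemma tform_lin: "tform q x y t = lin (\<lambda>cd. form q x (basis (fst cd)) * form q y (basis (snd cd))) t"
  unfolding tform_def lin_def by (simp add: mult.assoc)

lemma form_sym: "form q x y = form q y x"
proof -
  have "form q x y = (\<Sum>a\<in>Poly_Mapping.keys x. \<Sum>b\<in>Poly_Mapping.keys y.
      Poly_Mapping.lookup y b * Poly_Mapping.lookup x a * M q b a)"
    unfolding form_def
  proof (intro sum.cong refl)
    fix a b show "Poly_Mapping.lookup x a * Poly_Mapping.lookup y b * M q a b =
      Poly_Mapping.lookup y b * Poly_Mapping.lookup x a * M q b a"
      using pair_sym[OF rep_plane rep_plane, of q a b] by (simp add: mult.commute)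
  qed
  also have "\<dots> = form q y x" unfolding form_def by (rule sum.swap)
  finally show ?thesis .
qed


lemma key_hopf:
  "M q (class_of (pp_prod (rep a) (rep b))) d =
   (\<Sum>I\<in>{I. biideal (rep d) I}. q ^ hcount (rep d) (car (rep d) - I) I *
      M q a (class_of (restr (rep d) (car (rep d) - I))) * M q b (class_of (restr (rep d) I)))"
proof -
  have PQ: "plane_poset (pp_prod (rep a) (rep b))" using plane_prod[OF rep_plane rep_plane] .
  have "M q (class_of (pp_prod (rep a) (rep b))) d = pp_pair q (pp_prod (rep a) (rep b)) (rep d)"
    using pair_class_left[OF PQ rep_plane] .
  also have "\<dots> = (\<Sum>I\<in>{I. biideal (rep d) I}. q ^ hcount (rep d) (car (rep d) - I) I *
      pp_pair q (rep a) (restr (rep d) (car (rep d) - I)) * pp_pair q (rep b) (restr (rep d) I))"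
    using hopf_pp[OF rep_plane rep_plane rep_plane] .
  also have "\<dots> = (\<Sum>I\<in>{I. biideal (rep d) I}. q ^ hcount (rep d) (car (rep d) - I) I *
      M q a (class_of (restr (rep d) (car (rep d) - I))) * M q b (class_of (restr (rep d) I)))"
  proof (rule sum.cong[OF refl])
    fix I assume "I \<in> {I. biideal (rep d) I}"
    then have I: "I \<subseteq> car (rep d)" unfolding biideal_def by auto
    have p1: "plane_poset (restr (rep d) (car (rep d) - I))" using plane_restr[OF rep_plane] by blast
    have p2: "plane_poset (restr (rep d) I)" using plane_restr[OF rep_plane I] .
    show "q ^ hcount (rep d) (car (rep d) - I) I *
      pp_pair q (rep a) (restr (rep d) (car (rep d) - I)) * pp_pair q (rep b) (restr (rep d) I) =
      q ^ hcount (rep d) (car (rep d) - I) I *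
      M q a (class_of (restr (rep d) (car (rep d) - I))) * M q b (class_of (restr (rep d) I))"
      unfolding pair_class_right[OF rep_plane p1, of q a] pair_class_right[OF rep_plane p2, of q b] by (rule refl)
  qed
  finally show ?thesis .
qed

lemma swap4:
  assumes "finite A" "finite B" "finite D"
  shows "(\<Sum>a\<in>A. \<Sum>b\<in>B. \<Sum>d\<in>D. \<Sum>i\<in>E d. F a b d i) = (\<Sum>d\<in>D. \<Sum>i\<in>E d. \<Sum>a\<in>A. \<Sum>b\<in>B. F a b d i)"
proof -
  have "(\<Sum>a\<in>A. \<Sum>b\<in>B. \<Sum>d\<in>D. \<Sum>i\<in>E d. F a b d i) = (\<Sum>a\<in>A. \<Sum>d\<in>D. \<Sum>b\<in>B. \<Sum>i\<in>E d. F a b d i)"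
    by (rule sum.cong[OF refl], rule sum.swap)
  also have "\<dots> = (\<Sum>d\<in>D. \<Sum>a\<in>A. \<Sum>b\<in>B. \<Sum>i\<in>E d. F a b d i)" by (rule sum.swap)
  also have "\<dots> = (\<Sum>d\<in>D. \<Sum>a\<in>A. \<Sum>i\<in>E d. \<Sum>b\<in>B. F a b d i)"
    by (rule sum.cong[OF refl], rule sum.cong[OF refl], rule sum.swap)
  also have "\<dots> = (\<Sum>d\<in>D. \<Sum>i\<in>E d. \<Sum>a\<in>A. \<Sum>b\<in>B. F a b d i)"
    by (rule sum.cong[OF refl], rule sum.swap)
  finally show ?thesis .
qed

lemma hopf_lin: "form q (hmult x y) z = tform q x y (delta q z)"
proof -
  let ?kx = "Poly_Mapping.keys x" and ?ky = "Poly_Mapping.keys y" and ?kz = "Poly_Mapping.keys z"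
  let ?x = "Poly_Mapping.lookup x" and ?y = "Poly_Mapping.lookup y" and ?z = "Poly_Mapping.lookup z"
  let ?E = "\<lambda>d. {I. biideal (rep d) I}"
  let ?h = "\<lambda>d I. q ^ hcount (rep d) (car (rep d) - I) I"
  let ?C1 = "\<lambda>d I. class_of (restr (rep d) (car (rep d) - I))"
  let ?C2 = "\<lambda>d I. class_of (restr (rep d) I)"
  define F where "F = (\<lambda>a b d I. ?x a * ?y b * ?z d * (?h d I * M q a (?C1 d I) * M q b (?C2 d I)))"
  have L: "form q (hmult x y) z = (\<Sum>a\<in>?kx. \<Sum>b\<in>?ky. \<Sum>d\<in>?kz. \<Sum>I\<in>?E d. F a b d I)"
  proof -
    have "form q (hmult x y) z = (\<Sum>a\<in>?kx. \<Sum>b\<in>?ky. ?x a * ?y b *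
        lin (\<lambda>d. M q (class_of (pp_prod (rep a) (rep b))) d) z)"
      unfolding form_lin hmult_def by (simp add: lin_sum lin_single)
    also have "\<dots> = (\<Sum>a\<in>?kx. \<Sum>b\<in>?ky. ?x a * ?y b * (\<Sum>d\<in>?kz. ?z d * (\<Sum>I\<in>?E d. ?h d I * M q a (?C1 d I) * M q b (?C2 d I))))"
      unfolding lin_def key_hopf by simp
    also have "\<dots> = (\<Sum>a\<in>?kx. \<Sum>b\<in>?ky. \<Sum>d\<in>?kz. \<Sum>I\<in>?E d. F a b d I)"
      unfolding F_def by (simp add: sum_distrib_left mult.assoc)
    finally show ?thesis .
  qed
  have R: "tform q x y (delta q z) = (\<Sum>d\<in>?kz. \<Sum>I\<in>?E d. \<Sum>a\<in>?kx. \<Sum>b\<in>?ky. F a b d I)"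
  proof -
    let ?G = "\<lambda>cd. form q x (basis (fst cd)) * form q y (basis (snd cd))"
    have fE: "\<And>d. finite (?E d)" using finite_biideals[OF rep_plane] by blast
    have "tform q x y (delta q z) = (\<Sum>d\<in>?kz. ?z d * (\<Sum>I\<in>?E d. ?h d I * ?G (?C1 d I, ?C2 d I)))"
      unfolding tform_lin delta_def delta_basis_def Let_def
      by (simp add: lin_sum lin_map lin_single fE)
    also have "\<dots> = (\<Sum>d\<in>?kz. ?z d * (\<Sum>I\<in>?E d. ?h d I *
        ((\<Sum>a\<in>?kx. ?x a * M q a (?C1 d I)) * (\<Sum>b\<in>?ky. ?y b * M q b (?C2 d I)))))"
      unfolding form_basis lin_def by simp
    also have "\<dots> = (\<Sum>d\<in>?kz. \<Sum>I\<in>?E d. \<Sum>a\<in>?kx. \<Sum>b\<in>?ky. F a b d I)"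
      unfolding F_def by (simp add: sum_distrib_left sum_distrib_right sum_product mult_ac)
    finally show ?thesis .
  qed
  show ?thesis unfolding L R by (rule swap4) simp_all
qed


section \<open>Nondegeneracy\<close>

lemma nondeg_left:
  fixes q :: "'k::field" and x :: "'k hpp"
  assumes q: "q \<noteq> 0" and h: "\<forall>y. form q x y = 0"
  shows "x = 0"
proof (rule ccontr)
  assume "x \<noteq> 0"
  then have ne: "Poly_Mapping.keys x \<noteq> {}" by simp
  then obtain a0 where a0: "a0 \<in> Poly_Mapping.keys x"
    and mn: "\<forall>a. a \<in> Poly_Mapping.keys x \<longrightarrow> card (code (rep a0)) \<le> card (code (rep a))"
    using ex_has_least_nat[of "\<lambda>a. a \<in> Poly_Mapping.keys x" _ "\<lambda>a. card (code (rep a))"] by blast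
  define P0 where "P0 = rep a0"
  have P0: "plane_poset P0" unfolding P0_def by (rule rep_plane)
  have iP0: "plane_poset (iota P0)" using plane_iota[OF P0] .
  define c0 where "c0 = class_of (iota P0)"
  let ?tri = "{(i,j). i < j \<and> j < card (car P0)}"
  have Mval: "M q a c0 = (if card (car (rep a)) = card (car P0) \<and> code (rep a) \<inter> (?tri - code P0) = {}
      then q ^ (card (code (rep a)) + card (code (iota P0))) else 0)" for a
    unfolding c0_def pair_class_right[OF rep_plane iP0] pp_pair_code[OF rep_plane iP0]
      code_iota[OF P0] iota_simps by simp
  have zero: "M q a c0 = 0" if a: "a \<in> Poly_Mapping.keys x - {a0}" for a
  proof (rule ccontr)
    assume "M q a c0 \<noteq> 0"
    then have c: "card (car (rep a)) = card (car P0)" "code (rep a) \<inter> (?tri - code P0) = {}"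
      using Mval[of a] by (auto split: if_splits)
    have "code (rep a) \<subseteq> ?tri" using code_sub[OF rep_plane] c(1) by fastforce
    then have sub: "code (rep a) \<subseteq> code P0" using c(2) by blast
    have "card (code P0) \<le> card (code (rep a))" using mn a unfolding P0_def by blast
    then have "code (rep a) = code P0" using sub finite_code[OF P0] by (metis card_seteq)
    then have "a = a0" using class_eq[of a a0] c(1) unfolding P0_def by simp
    then show False using a by simp
  qed
  have nz: "M q a0 c0 \<noteq> 0" using Mval[of a0] q unfolding P0_def by auto
  have "form q x (basis c0) = (\<Sum>a\<in>Poly_Mapping.keys x. Poly_Mapping.lookup x a * M q a c0)"
    unfolding form_basis lin_def ..
  also have "\<dots> = Poly_Mapping.lookup x a0 * M q a0 c0 +
      (\<Sum>a\<in>Poly_Mapping.keys x - {a0}. Poly_Mapping.lookup x a * M q a c0)"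
    using a0 by (simp add: sum.remove)
  also have "(\<Sum>a\<in>Poly_Mapping.keys x - {a0}. Poly_Mapping.lookup x a * M q a c0) = 0"
    using zero by (intro sum.neutral) simp
  finally have "form q x (basis c0) = Poly_Mapping.lookup x a0 * M q a0 c0" by simp
  moreover have "Poly_Mapping.lookup x a0 \<noteq> 0" using a0 not_in_keys_iff_lookup_eq_zero by metis
  ultimately have "form q x (basis c0) \<noteq> 0" using nz by simp
  then show False using h by blast
qed

definition A2 :: ppos where "A2 = ({0,1}, {(0,0),(1,1),(0,1)}, {(0,0),(1,1)})"

lemma plane_A2: "plane_poset A2"
  unfolding plane_poset_def A2_def car_def relh_def relr_def partial_order_on_def preorder_on_def
    refl_on_def trans_def antisym_def by auto

lemma code_A2: "0 < card (code A2)"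
proof -
  have "(0,1) \<in> hp A2" unfolding hp_def lth_def A2_def car_def relh_def by simp
  then have "hp A2 \<noteq> {}" by blast
  then show ?thesis using card_code[OF plane_A2] finite_hp[OF plane_A2] by (simp add: card_gt_0_iff)
qed

lemma degenerate_zero: "\<not> nondegenerate (0::'k::field)"
proof
  assume nd: "nondegenerate (0::'k)"
  define c0 where "c0 = class_of A2"
  have "form (0::'k) (basis c0) y = 0" for y
  proof -
    have "form (0::'k) (basis c0) y = lin (\<lambda>a. M 0 a c0) y" using form_sym form_basis by metis
    also have "\<dots> = 0" unfolding lin_def
    proof (intro sum.neutral ballI)
      fix a
      have "M (0::'k) a c0 = pp_pair 0 (rep a) A2" unfolding c0_def using pair_class_right[OF rep_plane plane_A2] .
      also have "\<dots> = 0" unfolding pp_pair_code[OF rep_plane plane_A2] using code_A2 by simp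
      finally show "Poly_Mapping.lookup y a * M (0::'k) a c0 = 0" by simp
    qed
    finally show ?thesis .
  qed
  then have "basis c0 = (0::'k hpp)" using nd unfolding nondegenerate_def by blast
  moreover have "Poly_Mapping.lookup (basis c0) c0 = (1::'k)" unfolding basis_def by simp
  ultimately show False by simp
qed

theorem theorem23:
  fixes q :: "'k::field"
  shows "(\<forall>x y :: 'k hpp. form q x y = form q y x)
       \<and> (\<forall>x y z :: 'k hpp. form q (hmult x y) z = tform q x y (delta q z))
       \<and> (nondegenerate q \<longleftrightarrow> q \<noteq> 0)"
proof (intro conjI allI)
  fix x y :: "'k hpp" show "form q x y = form q y x" by (rule form_sym)
next
  fix x y z :: "'k hpp" show "form q (hmult x y) z = tform q x y (delta q z)" by (rule hopf_lin)
next
  show "nondegenerate q \<longleftrightarrow> q \<noteq> 0"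
  proof
    assume "nondegenerate q" then show "q \<noteq> 0" using degenerate_zero by blast
  next
    assume q: "q \<noteq> 0"
    show "nondegenerate q" unfolding nondegenerate_def
    proof (intro conjI allI impI)
      fix x :: "'k hpp" assume "\<forall>y. form q x y = 0" then show "x = 0" using nondeg_left[OF q] by blast
    next
      fix y :: "'k hpp" assume "\<forall>x. form q x y = 0"
      then have "\<forall>x. form q y x = 0" using form_sym by metis
      then show "y = 0" using nondeg_left[OF q] by blast
    qed
  qed
qed

end
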